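(* Let $\vec G$ be an orientation of the Coxeter diagram $s_1-\cdots-s_{n-1}$ of $S_n$, with up and down indices determined as described below. Then the Cambrian lattice $\mathcal C(\vec G)$ is isomorphic to the subposet of the weak order on $S_n$ consisting of the permutations that avoid both $\bar{2}31$ and $31\underline{2}$.
   Context: Weak order on $S_n$: $x\le y$ iff $I(x)\subseteq I(y)$, $I(x)=\{(x_j,x_i):i<j,x_i>x_j\}$; $s_i=(i,i+1)$. $\Theta(\vec G)$ is the smallest lattice congruence of the weak order with $t\equiv ts$ for every directed edge $s\to t$; $\mathcal C(\vec G)$ is the quotient lattice. Up/down indices: for $b\in[2,n-1]$, $b$ is up if $s_b\to s_{b-1}$ in $\vec G$ and down if $s_{b-1}\to s_b$; the indices $1$ and $n$ are declared up or down arbitrarily. A permutation $x=x_1\cdots x_n$ contains $\bar{2}31$ if there are $i<j<k$ with $x_k<x_i<x_j$ and $x_i$ up; it contains $31\underline{2}$ if there are $i<j<k$ with $x_j<x_k<x_i$ and $x_k$ down; otherwise it avoids the pattern. *)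

theory Defs
  imports Main
begin

text \<open>Permutations of [n] in one-line notation: a list x = [x_1,...,x_n]
  (0-indexed in Isabelle: x_i = x ! (i-1)).\<close>

definition perms :: "nat \<Rightarrow> nat list set" where
  "perms n = {xs. distinct xs \<and> set xs = {1..n}}"

text \<open>Product of permutations as composition of maps: (x y)(k) = x(y(k)).\<close>
definition pmult :: "nat list \<Rightarrow> nat list \<Rightarrow> nat list" where
  "pmult x y = map (\<lambda>v. x ! (v - 1)) y"

definition stransp :: "nat \<Rightarrow> nat \<Rightarrow> nat list" where
  "stransp n i = map (\<lambda>k. if k = i then i + 1 else if k = i + 1 then i else k) [1..<n+1]"

definition inversions :: "nat list \<Rightarrow> (nat \<times> nat) set" where
  "inversions x = {(x ! j, x ! i) | i j. i < j \<and> j < length x \<and> x ! i > x ! j}"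

definition weak_le :: "nat list \<Rightarrow> nat list \<Rightarrow> bool" where
  "weak_le x y \<longleftrightarrow> inversions x \<subseteq> inversions y"

definition is_meet :: "nat \<Rightarrow> nat list \<Rightarrow> nat list \<Rightarrow> nat list \<Rightarrow> bool" where
  "is_meet n x y m \<longleftrightarrow> m \<in> perms n \<and> weak_le m x \<and> weak_le m y \<and>
     (\<forall>z\<in>perms n. weak_le z x \<and> weak_le z y \<longrightarrow> weak_le z m)"

definition is_join :: "nat \<Rightarrow> nat list \<Rightarrow> nat list \<Rightarrow> nat list \<Rightarrow> bool" where
  "is_join n x y m \<longleftrightarrow> m \<in> perms n \<and> weak_le x m \<and> weak_le y m \<and>
     (\<forall>z\<in>perms n. weak_le x z \<and> weak_le y z \<longrightarrow> weak_le m z)"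

definition lattice_cong :: "nat \<Rightarrow> (nat list \<times> nat list) set \<Rightarrow> bool" where
  "lattice_cong n R \<longleftrightarrow> equiv (perms n) R \<and>
     (\<forall>x y z m m'. (x, y) \<in> R \<and> z \<in> perms n \<and> is_meet n x z m \<and> is_meet n y z m'
        \<longrightarrow> (m, m') \<in> R) \<and>
     (\<forall>x y z m m'. (x, y) \<in> R \<and> z \<in> perms n \<and> is_join n x z m \<and> is_join n y z m'
        \<longrightarrow> (m, m') \<in> R)"

text \<open>An orientation of the Coxeter diagram s_1 - ... - s_{n-1};
  E i j means the directed edge s_i \<rightarrow> s_j.\<close>
definition orientation :: "nat \<Rightarrow> (nat \<Rightarrow> nat \<Rightarrow> bool) \<Rightarrow> bool" where
  "orientation n E \<longleftrightarrow>
     (\<forall>i j. E i j \<longrightarrow> 1 \<le> i \<and> i \<le> n - 1 \<and> 1 \<le> j \<and> j \<le> n - 1 \<and> (j = i + 1 \<or> i = j + 1)) \<and>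
     (\<forall>i. 1 \<le> i \<and> i + 2 \<le> n \<longrightarrow> (E i (i + 1) \<longleftrightarrow> \<not> E (i + 1) i))"

definition cambrian_cong :: "nat \<Rightarrow> (nat \<Rightarrow> nat \<Rightarrow> bool) \<Rightarrow> (nat list \<times> nat list) set" where
  "cambrian_cong n E = \<Inter> {R. lattice_cong n R \<and>
     (\<forall>i j. E i j \<longrightarrow> (stransp n j, pmult (stransp n j) (stransp n i)) \<in> R)}"

text \<open>Order of the quotient lattice: [x] \<le> [y] iff [x \<and> y] = [x].\<close>
definition quot_le :: "nat \<Rightarrow> (nat list \<times> nat list) set \<Rightarrow> nat list set \<Rightarrow> nat list set \<Rightarrow> bool" where
  "quot_le n R X Y \<longleftrightarrow> (\<exists>x\<in>X. \<exists>y\<in>Y. \<exists>m. is_meet n x y m \<and> m \<in> X)"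

text \<open>Pattern containment; "down" means "not up".\<close>
definition contains_bar231 :: "(nat \<Rightarrow> bool) \<Rightarrow> nat list \<Rightarrow> bool" where
  "contains_bar231 up x \<longleftrightarrow> (\<exists>i j k. i < j \<and> j < k \<and> k < length x \<and>
     x ! k < x ! i \<and> x ! i < x ! j \<and> up (x ! i))"

definition contains_312under :: "(nat \<Rightarrow> bool) \<Rightarrow> nat list \<Rightarrow> bool" where
  "contains_312under up x \<longleftrightarrow> (\<exists>i j k. i < j \<and> j < k \<and> k < length x \<and>
     x ! j < x ! k \<and> x ! k < x ! i \<and> \<not> up (x ! k))"

definition avoiders :: "nat \<Rightarrow> (nat \<Rightarrow> bool) \<Rightarrow> nat list set" where
  "avoiders n up = {x \<in> perms n. \<not> contains_bar231 up x \<and> \<not> contains_312under up x}"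

end

theory Submission
  imports Defs
begin

definition swp :: "nat list \<Rightarrow> nat \<Rightarrow> nat list" where
  "swp x p = x[p := x!(p+1), p+1 := x!p]"

lemma length_swp[simp]: "length (swp x p) = length x"
  by (simp add: swp_def)

lemma nth_swp: "p+1 < length x \<Longrightarrow> k < length x \<Longrightarrow>
  swp x p ! k = (if k = p then x!(p+1) else if k = p+1 then x!p else x!k)"
  by (auto simp: swp_def nth_list_update)

lemma swp_perms: "x \<in> perms n \<Longrightarrow> p+1 < length x \<Longrightarrow> swp x p \<in> perms n"
  unfolding perms_def swp_def by simp

lemma perms_length: "x \<in> perms n \<Longrightarrow> length x = n"
proof -
  assume "x \<in> perms n"
  then have "distinct x" "set x = {1..n}" unfolding perms_def by auto
  then show ?thesis using distinct_card[of x] by simp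
qed

lemma inv_mem: "(u,v) \<in> inversions x \<longleftrightarrow> (\<exists>i j. i < j \<and> j < length x \<and> u = x!j \<and> v = x!i \<and> x!i > x!j)"
  unfolding inversions_def by (simp, blast)

lemma inv_nth: "distinct x \<Longrightarrow> i < length x \<Longrightarrow> j < length x \<Longrightarrow>
   ((x!i, x!j) \<in> inversions x) = (j < i \<and> x!i < x!j)"
proof
  assume d: "distinct x" and l: "i < length x" "j < length x" and "(x!i, x!j) \<in> inversions x"
  then obtain ii jj where h: "x!i = x!jj" "x!j = x!ii" "ii < jj" "jj < length x" "x!ii > x!jj"
    unfolding inv_mem by blast
  then have "i = jj" "j = ii" using d l nth_eq_iff_index_eq[OF d] by auto
  then show "j < i \<and> x!i < x!j" using h by auto
next
  assume l: "i < length x" and "j < i \<and> x!i < x!j"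
  then show "(x!i, x!j) \<in> inversions x" unfolding inv_mem by blast
qed

lemma inv_elem: "(u,v) \<in> inversions x \<Longrightarrow> \<exists>i j. i < length x \<and> j < length x \<and> u = x!i \<and> v = x!j \<and> j < i \<and> u < v"
proof -
  assume "(u,v) \<in> inversions x"
  then obtain i j where h: "i < j" "j < length x" "u = x!j" "v = x!i" "x!i > x!j" unfolding inv_mem by blast
  show ?thesis by (rule exI[of _ j], rule exI[of _ i]) (use h in auto)
qed
lemma inv_swp:
  assumes d: "distinct x" and p: "p+1 < length x"
  shows "inversions (swp x p) = (if x!p < x!(p+1) then insert (x!p, x!(p+1)) (inversions x)
           else inversions x - {(x!(p+1), x!p)})"
proof -
  define t where "t = (\<lambda>k. if k = p then p+1 else if k = p+1 then p else k)"
  have yn: "\<And>k. k < length x \<Longrightarrow> swp x p ! k = x ! (t k)" using p by (simp add: nth_swp t_def)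
  have tl: "\<And>k. k < length x \<Longrightarrow> t k < length x" using p by (auto simp: t_def)
  have tt: "\<And>k. t (t k) = k" by (auto simp: t_def)
  have dy: "distinct (swp x p)" using d p by (simp add: swp_def)
  have lt: "\<And>i j. i < j \<Longrightarrow> \<not> (i = p \<and> j = p+1) \<Longrightarrow> t i < t j" by (auto simp: t_def)
  show ?thesis
  proof (rule set_eqI)
    fix z :: "nat \<times> nat"
    obtain u v where z: "z = (u,v)" by fastforce
    have "((u,v) \<in> inversions (swp x p)) = ((u,v) \<in> (if x!p < x!(p+1) then insert (x!p, x!(p+1)) (inversions x)
           else inversions x - {(x!(p+1), x!p)}))"
    proof
      assume "(u,v) \<in> inversions (swp x p)"
      from inv_elem[OF this] obtain i j where ij: "i < length x" "j < length x" "u = swp x p ! i" "v = swp x p ! j" "j < i" "u < v"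
        by auto
      show "(u,v) \<in> (if x!p < x!(p+1) then insert (x!p, x!(p+1)) (inversions x)
           else inversions x - {(x!(p+1), x!p)})"
      proof (cases "j = p \<and> i = p+1")
        case True
        then show ?thesis using ij p by (simp add: nth_swp)
      next
        case False
        then have "t j < t i" using lt ij by blast
        then have inv: "(u,v) \<in> inversions x" using ij yn tl inv_nth[OF d] by metis
        have "(u,v) \<noteq> (x!(p+1), x!p)"
        proof
          assume "(u,v) = (x!(p+1), x!p)"
          then have "x!(t i) = x!(p+1)" "x!(t j) = x!p" using ij yn by auto
          then have "t i = p+1" "t j = p" using d tl ij p by (auto simp: nth_eq_iff_index_eq)
          then have "i = p" "j = p+1" by (auto simp: t_def split: if_splits)
          then show False using ij by simp
        qed
        then show ?thesis using inv by auto
      qed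
    next
      assume h: "(u,v) \<in> (if x!p < x!(p+1) then insert (x!p, x!(p+1)) (inversions x)
           else inversions x - {(x!(p+1), x!p)})"
      show "(u,v) \<in> inversions (swp x p)"
      proof (cases "(u,v) = (x!p, x!(p+1)) \<and> x!p < x!(p+1)")
        case True
        then have "(u,v) = (swp x p ! (p+1), swp x p ! p)" using p by (simp add: nth_swp)
        then show ?thesis using True inv_nth[OF dy, of "p+1" p] p by simp
      next
        case False
        then have inv: "(u,v) \<in> inversions x" and ne: "(u,v) \<noteq> (x!(p+1), x!p)"
          using h inv_nth[OF d, of "p+1" p] p by (auto split: if_splits)
        obtain i j where ij: "i < length x" "j < length x" "u = x!i" "v = x!j" "j < i" "u < v"
          using inv_elem[OF inv] by blast
        have "\<not> (j = p \<and> i = p+1)" using ne ij by auto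
        then have "t j < t i" using lt ij by blast
        moreover have e1: "swp x p ! (t i) = u" using yn[OF tl[OF ij(1)]] tt ij by simp
        moreover have e2: "swp x p ! (t j) = v" using yn[OF tl[OF ij(2)]] tt ij by simp
        ultimately have "(swp x p ! (t i), swp x p ! (t j)) \<in> inversions (swp x p)"
          using inv_nth[OF dy, of "t i" "t j"] tl ij by simp
        then show ?thesis using e1 e2 by simp
      qed
    qed
    then show "(z \<in> inversions (swp x p)) = (z \<in> (if x!p < x!(p+1) then insert (x!p, x!(p+1)) (inversions x)
           else inversions x - {(x!(p+1), x!p)}))" using z by simp
  qed
qed

lemma permsD: "x \<in> perms n \<Longrightarrow> distinct x \<and> set x = {1..n} \<and> length x = n"
  using perms_length unfolding perms_def by auto

lemma perm_nth_bound: "x \<in> perms n \<Longrightarrow> i < n \<Longrightarrow> 1 \<le> x!i \<and> x!i \<le> n"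
  using permsD[of x n] nth_mem[of i x] by fastforce

lemma perm_val: "x \<in> perms n \<Longrightarrow> 1 \<le> v \<Longrightarrow> v \<le> n \<Longrightarrow> \<exists>i<n. x!i = v"
proof -
  assume x: "x \<in> perms n" and v: "1 \<le> v" "v \<le> n"
  then have "v \<in> set x" using permsD[OF x] by simp
  then obtain i where "i < length x" "x!i = v" by (auto simp: in_set_conv_nth)
  then show ?thesis using permsD[OF x] by auto
qed

lemma inv_bound: "x \<in> perms n \<Longrightarrow> (a,b) \<in> inversions x \<Longrightarrow> 1 \<le> a \<and> a < b \<and> b \<le> n"
proof -
  assume x: "x \<in> perms n" and ab: "(a,b) \<in> inversions x"
  then obtain i j where h: "i < length x" "j < length x" "a = x!i" "b = x!j" "a < b" using inv_elem[OF ab] by blast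
  have "length x = n" using permsD[OF x] by simp
  then show ?thesis using h perm_nth_bound[OF x, of i] perm_nth_bound[OF x, of j] by simp
qed

lemma inv_sub: "x \<in> perms n \<Longrightarrow> inversions x \<subseteq> {1..n} \<times> {1..n}"
proof
  fix z assume x: "x \<in> perms n" and z: "z \<in> inversions x"
  obtain a b where "z = (a,b)" by fastforce
  then show "z \<in> {1..n} \<times> {1..n}" using inv_bound[OF x, of a b] z by auto
qed

lemma inv_finite: "x \<in> perms n \<Longrightarrow> finite (inversions x)"
  using inv_sub finite_subset by blast

lemma inv_trans:
  assumes x: "x \<in> perms n" and ab: "(a,b) \<in> inversions x" and bc: "(b,c) \<in> inversions x"
  shows "(a,c) \<in> inversions x"
proof -
  have d: "distinct x" and l: "length x = n" using permsD[OF x] by auto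
  obtain i j where h1: "i < n" "j < n" "a = x!i" "b = x!j" "j < i" "a < b" using inv_elem[OF ab] l by auto
  obtain j' k where h2: "j' < n" "k < n" "b = x!j'" "c = x!k" "k < j'" "b < c" using inv_elem[OF bc] l by auto
  have "j' = j" using h1 h2 d l nth_eq_iff_index_eq by metis
  then show ?thesis using inv_nth[OF d, of i k] h1 h2 l by auto
qed

lemma inv_cotrans:
  assumes x: "x \<in> perms n" and ac: "(a,c) \<in> inversions x" and "a < b" "b < c"
  shows "(a,b) \<in> inversions x \<or> (b,c) \<in> inversions x"
proof -
  have d: "distinct x" and l: "length x = n" using permsD[OF x] by auto
  obtain i k where h1: "i < n" "k < n" "a = x!i" "c = x!k" "k < i" "a < c" using inv_elem[OF ac] l by auto
  have "1 \<le> b" "b \<le> n" using inv_bound[OF x ac] assms by auto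
  then obtain j where j: "j < n" "x!j = b" using perm_val[OF x] by blast
  have "k < j \<or> j < i"
  proof (rule ccontr)
    assume "\<not> (k < j \<or> j < i)"
    then have "j \<le> k" "i \<le> j" by auto
    then show False using h1 by auto
  qed
  then show ?thesis using inv_nth[OF d] h1 j l assms by auto
qed

lemma perm_eq:
  assumes x: "x \<in> perms n" and y: "y \<in> perms n" and I: "inversions x = inversions y"
  shows "x = y"
proof (rule ccontr)
  assume ne: "x \<noteq> y"
  have dx: "distinct x" and lx: "length x = n" using permsD[OF x] by auto
  have dy: "distinct y" and ly: "length y = n" using permsD[OF y] by auto
  have ex: "\<exists>k. k < n \<and> x!k \<noteq> y!k"
  proof (rule ccontr)
    assume "\<not> (\<exists>k. k < n \<and> x!k \<noteq> y!k)"
    then have "x = y" using lx ly by (intro nth_equalityI) auto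
    then show False using ne by simp
  qed
  define k where "k = (LEAST k. k < n \<and> x!k \<noteq> y!k)"
  have k: "k < n" "x!k \<noteq> y!k" using LeastI_ex[OF ex] unfolding k_def by auto
  have before: "\<And>i. i < k \<Longrightarrow> x!i = y!i"
  proof -
    fix i assume "i < k"
    then have "\<not> (i < n \<and> x!i \<noteq> y!i)" using not_less_Least[of i "\<lambda>k. k < n \<and> x!k \<noteq> y!k"] unfolding k_def by blast
    then show "x!i = y!i" using \<open>i < k\<close> k(1) by simp
  qed
  obtain j where j: "j < n" "y!j = x!k" using perm_val[OF y] perm_nth_bound[OF x k(1)] by blast
  obtain l where l: "l < n" "x!l = y!k" using perm_val[OF x] perm_nth_bound[OF y k(1)] by blast
  have "j \<noteq> k" using j k by auto
  moreover have "\<not> j < k"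
  proof
    assume "j < k"
    then have "x!j = x!k" using before j by simp
    then have "j = k" using nth_eq_iff_index_eq[OF dx] j k lx by simp
    then show False using \<open>j < k\<close> by simp
  qed
  ultimately have jk: "k < j" by simp
  have "l \<noteq> k" using l k by auto
  moreover have "\<not> l < k"
  proof
    assume "l < k"
    then have "y!l = y!k" using before l by simp
    then have "l = k" using nth_eq_iff_index_eq[OF dy] l k ly by simp
    then show False using \<open>l < k\<close> by simp
  qed
  ultimately have lk: "k < l" by simp
  show False
  proof (cases "x!k < y!k")
    case True
    have e: "(y!j, y!k) \<in> inversions y \<longleftrightarrow> k < j \<and> y!j < y!k" by (rule inv_nth[OF dy]) (use j k ly in auto)
    have "(y!j, y!k) \<in> inversions y" using e j jk True by simp
    moreover have e2: "(x!k, x!l) \<in> inversions x \<longleftrightarrow> l < k \<and> x!k < x!l" by (rule inv_nth[OF dx]) (use l k lx in auto)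
    moreover have "(x!k, x!l) \<notin> inversions x" using e2 lk by simp
    ultimately show False using I j l by simp
  next
    case False
    then have lt: "y!k < x!k" using k by simp
    have e: "(x!l, x!k) \<in> inversions x \<longleftrightarrow> k < l \<and> x!l < x!k" by (rule inv_nth[OF dx]) (use l k lx in auto)
    have "(x!l, x!k) \<in> inversions x" using e l lk lt by simp
    moreover have e2: "(y!k, y!j) \<in> inversions y \<longleftrightarrow> j < k \<and> y!k < y!j" by (rule inv_nth[OF dy]) (use j k ly in auto)
    moreover have "(y!k, y!j) \<notin> inversions y" using e2 jk by simp
    ultimately show False using I j l by simp
  qed
qed

inductive_set Jset :: "(nat \<Rightarrow> bool) \<Rightarrow> (nat \<times> nat) set \<Rightarrow> (nat \<times> nat) set"
  for up :: "nat \<Rightarrow> bool" and I :: "(nat \<times> nat) set" where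
  Jintro: "(a,b) \<in> I \<Longrightarrow> (\<forall>c. a < c \<and> c < b \<and> up c \<longrightarrow> (c,b) \<in> Jset up I) \<Longrightarrow>
     (\<forall>c. a < c \<and> c < b \<and> \<not> up c \<longrightarrow> (a,c) \<in> Jset up I) \<Longrightarrow> (a,b) \<in> Jset up I"

inductive_set Kset :: "(nat \<Rightarrow> bool) \<Rightarrow> nat \<Rightarrow> (nat \<times> nat) set \<Rightarrow> (nat \<times> nat) set"
  for up :: "nat \<Rightarrow> bool" and n :: nat and I :: "(nat \<times> nat) set" where
  Kbase: "(a,b) \<in> I \<Longrightarrow> (a,b) \<in> Kset up n I"
| Kup: "(a,c) \<in> Kset up n I \<Longrightarrow> a < c \<Longrightarrow> c < b \<Longrightarrow> b \<le> n \<Longrightarrow> up c \<Longrightarrow> (a,b) \<in> Kset up n I"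
| Kdown: "(c,b) \<in> Kset up n I \<Longrightarrow> a < c \<Longrightarrow> c < b \<Longrightarrow> 1 \<le> a \<Longrightarrow> \<not> up c \<Longrightarrow> (a,b) \<in> Kset up n I"

lemma J_sub: "Jset up I \<subseteq> I"
  by (auto elim: Jset.cases)

lemma J_memD: "(a,b) \<in> Jset up I \<Longrightarrow> (a,b) \<in> I \<and> (\<forall>c. a < c \<and> c < b \<and> up c \<longrightarrow> (c,b) \<in> Jset up I) \<and>
     (\<forall>c. a < c \<and> c < b \<and> \<not> up c \<longrightarrow> (a,c) \<in> Jset up I)"
  by (erule Jset.cases) auto

lemma J_mono: "I \<subseteq> I' \<Longrightarrow> Jset up I \<subseteq> Jset up I'"
proof
  fix z assume sub: "I \<subseteq> I'" and "z \<in> Jset up I"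
  obtain a b where z: "z = (a,b)" by fastforce
  have "(a,b) \<in> Jset up I" using \<open>z \<in> Jset up I\<close> z by simp
  then have "(a,b) \<in> Jset up I'"
  proof (induction rule: Jset.induct)
    case (Jintro a b)
    show ?case by (rule Jset.Jintro) (use Jintro sub in auto)
  qed
  then show "z \<in> Jset up I'" using z by simp
qed

lemma J_idem: "Jset up (Jset up I) = Jset up I"
proof
  show "Jset up (Jset up I) \<subseteq> Jset up I" by (rule J_sub)
  show "Jset up I \<subseteq> Jset up (Jset up I)"
  proof
    fix z assume "z \<in> Jset up I"
    obtain a b where z: "z = (a,b)" by fastforce
    have "(a,b) \<in> Jset up I" using \<open>z \<in> Jset up I\<close> z by simp
    then have "(a,b) \<in> Jset up (Jset up I)"
    proof (induction rule: Jset.induct)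
      case (Jintro a b)
      have "(a,b) \<in> Jset up I" by (rule Jset.Jintro) (use Jintro in auto)
      then show ?case by (intro Jset.Jintro) (use Jintro in auto)
    qed
    then show "z \<in> Jset up (Jset up I)" using z by simp
  qed
qed

lemma J_remove: "p \<notin> Jset up I \<Longrightarrow> Jset up (I - {p}) = Jset up I"
proof
  show "Jset up (I - {p}) \<subseteq> Jset up I" by (rule J_mono) auto
  assume np: "p \<notin> Jset up I"
  show "Jset up I \<subseteq> Jset up (I - {p})"
  proof
    fix z assume "z \<in> Jset up I"
    obtain a b where z: "z = (a,b)" by fastforce
    have "(a,b) \<in> Jset up I" using \<open>z \<in> Jset up I\<close> z by simp
    then have "(a,b) \<in> Jset up (I - {p})"
    proof (induction rule: Jset.induct)
      case (Jintro a b)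
      have "(a,b) \<in> Jset up I" by (rule Jset.Jintro) (use Jintro in auto)
      then have "(a,b) \<noteq> p" using np by auto
      then show ?case by (intro Jset.Jintro) (use Jintro in auto)
    qed
    then show "z \<in> Jset up (I - {p})" using z by simp
  qed
qed

lemma J_full:
  assumes cl: "\<And>a b c. (a,b) \<in> I \<Longrightarrow> a < c \<Longrightarrow> c < b \<Longrightarrow> up c \<Longrightarrow> (c,b) \<in> I"
    and cl2: "\<And>a b c. (a,b) \<in> I \<Longrightarrow> a < c \<Longrightarrow> c < b \<Longrightarrow> \<not> up c \<Longrightarrow> (a,c) \<in> I"
  shows "Jset up I = I"
proof
  show "Jset up I \<subseteq> I" by (rule J_sub)
  have "\<forall>a b. b - a = k \<longrightarrow> (a,b) \<in> I \<longrightarrow> (a,b) \<in> Jset up I" for k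
  proof (induction k rule: less_induct)
    case (less k)
    show ?case
    proof (intro allI impI)
      fix a b assume k: "b - a = k" and ab: "(a,b) \<in> I"
      show "(a,b) \<in> Jset up I"
      proof (rule Jset.Jintro[OF ab], safe)
        fix c assume "a < c" "c < b" "up c"
        then show "(c,b) \<in> Jset up I" using less.IH[of "b - c"] cl[OF ab] k by auto
      next
        fix c assume "a < c" "c < b" "\<not> up c"
        then show "(a,c) \<in> Jset up I" using less.IH[of "c - a"] cl2[OF ab] k by auto
      qed
    qed
  qed
  then show "I \<subseteq> Jset up I" by auto
qed

lemma K_ext: "I \<subseteq> Kset up n I"
  by (auto intro: Kset.Kbase)

lemma K_mono: "I \<subseteq> I' \<Longrightarrow> Kset up n I \<subseteq> Kset up n I'"
proof
  fix z assume sub: "I \<subseteq> I'" and "z \<in> Kset up n I"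
  obtain a b where z: "z = (a,b)" by fastforce
  have "(a,b) \<in> Kset up n I" using \<open>z \<in> Kset up n I\<close> z by simp
  then have "(a,b) \<in> Kset up n I'"
    by (induction rule: Kset.induct) (use sub in \<open>auto intro: Kset.intros\<close>)
  then show "z \<in> Kset up n I'" using z by simp
qed

lemma K_idem: "Kset up n (Kset up n I) = Kset up n I"
proof
  show "Kset up n I \<subseteq> Kset up n (Kset up n I)" by (rule K_ext)
  show "Kset up n (Kset up n I) \<subseteq> Kset up n I"
  proof
    fix z assume "z \<in> Kset up n (Kset up n I)"
    obtain a b where z: "z = (a,b)" by fastforce
    have "(a,b) \<in> Kset up n (Kset up n I)" using \<open>z \<in> Kset up n (Kset up n I)\<close> z by simp
    then have "(a,b) \<in> Kset up n I"
      by (induction rule: Kset.induct) (auto intro: Kset.intros)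
    then show "z \<in> Kset up n I" using z by simp
  qed
qed

lemma K_insert: "p \<in> Kset up n I \<Longrightarrow> Kset up n (insert p I) = Kset up n I"
proof
  assume p: "p \<in> Kset up n I"
  show "Kset up n I \<subseteq> Kset up n (insert p I)" by (rule K_mono) auto
  have "insert p I \<subseteq> Kset up n I" using p K_ext by blast
  then show "Kset up n (insert p I) \<subseteq> Kset up n I" using K_mono K_idem by metis
qed

lemma K_closed:
  assumes c1: "\<And>a b c. (a,c) \<in> I \<Longrightarrow> a < c \<Longrightarrow> c < b \<Longrightarrow> b \<le> n \<Longrightarrow> up c \<Longrightarrow> (a,b) \<in> I"
    and c2: "\<And>a b c. (c,b) \<in> I \<Longrightarrow> a < c \<Longrightarrow> c < b \<Longrightarrow> 1 \<le> a \<Longrightarrow> \<not> up c \<Longrightarrow> (a,b) \<in> I"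
  shows "Kset up n I = I"
proof
  show "I \<subseteq> Kset up n I" by (rule K_ext)
  show "Kset up n I \<subseteq> I"
  proof
    fix z assume "z \<in> Kset up n I"
    obtain a b where z: "z = (a,b)" by fastforce
    have "(a,b) \<in> Kset up n I" using \<open>z \<in> Kset up n I\<close> z by simp
    then have "(a,b) \<in> I"
      by (induction rule: Kset.induct) (auto intro: c1 c2)
    then show "z \<in> I" using z by simp
  qed
qed

lemma pat_desc:
  fixes x :: "nat list"
  assumes d: "distinct x" and k: "k < length x"
  shows "i < j \<Longrightarrow> j < k \<Longrightarrow> x!k < x!i \<Longrightarrow> x!i < x!j \<Longrightarrow>
    \<exists>p. i < p \<and> p+1 < length x \<and> x!(p+1) < x!i \<and> x!i < x!p"
proof (induction "k - j" arbitrary: j rule: less_induct)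
  case (less j)
  show ?case
  proof (cases "j + 1 = k")
    case True
    then show ?thesis using less.prems k by (intro exI[of _ j]) auto
  next
    case False
    then have jk: "j + 1 < k" using less.prems by simp
    have ne: "x!(j+1) \<noteq> x!i" using d jk k less.prems nth_eq_iff_index_eq by fastforce
    show ?thesis
    proof (cases "x!(j+1) < x!i")
      case True
      then show ?thesis using less.prems jk k by (intro exI[of _ j]) auto
    next
      case False
      then have "x!i < x!(j+1)" using ne by simp
      then show ?thesis using less.hyps[of "j+1"] less.prems jk by auto
    qed
  qed
qed

lemma pat_desc2:
  fixes x :: "nat list"
  assumes d: "distinct x" and k: "k < length x"
  shows "i < j \<Longrightarrow> j < k \<Longrightarrow> x!j < x!k \<Longrightarrow> x!k < x!i \<Longrightarrow>
    \<exists>p. p+1 < k \<and> x!(p+1) < x!k \<and> x!k < x!p"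
proof (induction "j - i" arbitrary: i rule: less_induct)
  case (less i)
  show ?case
  proof (cases "i + 1 = j")
    case True
    then show ?thesis using less.prems k by (intro exI[of _ i]) auto
  next
    case False
    then have ij: "i + 1 < j" using less.prems by simp
    have ne: "x!(i+1) \<noteq> x!k" using d ij k less.prems nth_eq_iff_index_eq by fastforce
    show ?thesis
    proof (cases "x!(i+1) < x!k")
      case True
      then show ?thesis using less.prems ij k by (intro exI[of _ i]) auto
    next
      case False
      then have "x!k < x!(i+1)" using ne by simp
      then show ?thesis using less.hyps[of "i+1"] less.prems ij by auto
    qed
  qed
qed

lemma pat_asc:
  fixes x :: "nat list"
  assumes d: "distinct x" and k: "k < length x"
  shows "i < j \<Longrightarrow> j < k \<Longrightarrow> x!j < x!i \<Longrightarrow> x!i < x!k \<Longrightarrow>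
    \<exists>p. i < p \<and> p+1 < length x \<and> x!p < x!i \<and> x!i < x!(p+1)"
proof (induction "k - j" arbitrary: j rule: less_induct)
  case (less j)
  show ?case
  proof (cases "j + 1 = k")
    case True
    then show ?thesis using less.prems k by (intro exI[of _ j]) auto
  next
    case False
    then have jk: "j + 1 < k" using less.prems by simp
    have ne: "x!(j+1) \<noteq> x!i" using d jk k less.prems nth_eq_iff_index_eq by fastforce
    show ?thesis
    proof (cases "x!i < x!(j+1)")
      case True
      then show ?thesis using less.prems jk k by (intro exI[of _ j]) auto
    next
      case False
      then have "x!(j+1) < x!i" using ne by simp
      then show ?thesis using less.hyps[of "j+1"] less.prems jk by auto
    qed
  qed
qed

lemma pat_asc2:
  fixes x :: "nat list"
  assumes d: "distinct x" and k: "k < length x"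
  shows "i < j \<Longrightarrow> j < k \<Longrightarrow> x!i < x!k \<Longrightarrow> x!k < x!j \<Longrightarrow>
    \<exists>p. p+1 < k \<and> x!p < x!k \<and> x!k < x!(p+1)"
proof (induction "j - i" arbitrary: i rule: less_induct)
  case (less i)
  show ?case
  proof (cases "i + 1 = j")
    case True
    then show ?thesis using less.prems k by (intro exI[of _ i]) auto
  next
    case False
    then have ij: "i + 1 < j" using less.prems by simp
    have ne: "x!(i+1) \<noteq> x!k" using d ij k less.prems nth_eq_iff_index_eq by fastforce
    show ?thesis
    proof (cases "x!k < x!(i+1)")
      case True
      then show ?thesis using less.prems ij k by (intro exI[of _ i]) auto
    next
      case False
      then have "x!(i+1) < x!k" using ne by simp
      then show ?thesis using less.hyps[of "i+1"] less.prems ij by auto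
    qed
  qed
qed

definition idp :: "nat \<Rightarrow> nat list" where "idp n = map Suc [0..<n]"

lemma idp_len[simp]: "length (idp n) = n" by (simp add: idp_def)
lemma idp_nth: "k < n \<Longrightarrow> idp n ! k = k + 1" by (simp add: idp_def)

lemma idp_perm: "idp n \<in> perms n"
proof -
  have "set (idp n) = {1..n}"
  proof
    show "set (idp n) \<subseteq> {1..n}" by (auto simp: idp_def)
    show "{1..n} \<subseteq> set (idp n)"
    proof
      fix v assume "v \<in> {1..n}"
      then have "v - 1 < n" "Suc (v - 1) = v" by auto
      then show "v \<in> set (idp n)" unfolding idp_def by (metis atLeastLessThan_iff image_eqI le0 set_map set_upt)
    qed
  qed
  moreover have "distinct (idp n)" by (simp add: idp_def distinct_map)
  ultimately show ?thesis unfolding perms_def by simp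
qed

lemma idp_inv: "inversions (idp n) = {}"
  unfolding inversions_def by (auto simp: idp_nth)

lemma stransp_len[simp]: "length (stransp n j) = n"
  unfolding stransp_def by simp

lemma stransp_nth: "k < n \<Longrightarrow>
  stransp n j ! k = (if k + 1 = j then j + 1 else if k = j then j else k + 1)"
  unfolding stransp_def by (simp del: upt_Suc add: nth_upt)

lemma stransp_swp: "1 \<le> j \<Longrightarrow> j + 1 \<le> n \<Longrightarrow> stransp n j = swp (idp n) (j-1)"
  by (rule nth_equalityI) (auto simp: nth_swp stransp_nth idp_nth)

lemma stransp_perm: "1 \<le> j \<Longrightarrow> j + 1 \<le> n \<Longrightarrow> stransp n j \<in> perms n"
  using stransp_swp[of j n] swp_perms[OF idp_perm, of "j-1" n] by simp

lemma stransp_inv: "1 \<le> j \<Longrightarrow> j + 1 \<le> n \<Longrightarrow> inversions (stransp n j) = {(j, j+1)}"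
proof -
  assume a: "1 \<le> j" "j + 1 \<le> n"
  have "inversions (swp (idp n) (j-1)) = insert (j, j+1) {}"
    using inv_swp[of "idp n" "j-1"] idp_inv[of n] a permsD[OF idp_perm[of n]] idp_nth[of "j-1" n] idp_nth[of j n] by simp
  then show ?thesis using stransp_swp[OF a] by simp
qed

lemma gen1_eq: "1 \<le> j \<Longrightarrow> j + 2 \<le> n \<Longrightarrow> pmult (stransp n j) (stransp n (j+1)) = swp (stransp n j) j"
proof -
  assume a: "1 \<le> j" "j + 2 \<le> n"
  show ?thesis unfolding pmult_def
  proof (rule nth_equalityI)
    show "length (map (\<lambda>v. stransp n j ! (v - 1)) (stransp n (j + 1))) = length (swp (stransp n j) j)" by simp
    fix k assume "k < length (map (\<lambda>v. stransp n j ! (v - 1)) (stransp n (j + 1)))"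
    then have k: "k < n" by simp
    have "stransp n (j+1) ! k - 1 < n" using k a by (auto simp: stransp_nth)
    then show "map (\<lambda>v. stransp n j ! (v - 1)) (stransp n (j + 1)) ! k = swp (stransp n j) j ! k"
      using k a by (auto simp: stransp_nth nth_swp)
  qed
qed

lemma gen2_eq: "1 \<le> i \<Longrightarrow> i + 2 \<le> n \<Longrightarrow> pmult (stransp n (i+1)) (stransp n i) = swp (stransp n (i+1)) (i-1)"
proof -
  assume a: "1 \<le> i" "i + 2 \<le> n"
  show ?thesis unfolding pmult_def
  proof (rule nth_equalityI)
    show "length (map (\<lambda>v. stransp n (i+1) ! (v - 1)) (stransp n i)) = length (swp (stransp n (i+1)) (i-1))" by simp
    fix k assume "k < length (map (\<lambda>v. stransp n (i+1) ! (v - 1)) (stransp n i))"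
    then have k: "k < n" by simp
    have "stransp n i ! k - 1 < n" using k a by (auto simp: stransp_nth)
    then show "map (\<lambda>v. stransp n (i+1) ! (v - 1)) (stransp n i) ! k = swp (stransp n (i+1)) (i-1) ! k"
      using k a by (auto simp: stransp_nth nth_swp)
  qed
qed

lemma gen1_perm: "1 \<le> j \<Longrightarrow> j + 2 \<le> n \<Longrightarrow> pmult (stransp n j) (stransp n (j+1)) \<in> perms n"
  using gen1_eq[of j n] swp_perms[of "stransp n j" n j] stransp_perm[of j n] by simp

lemma gen2_perm: "1 \<le> i \<Longrightarrow> i + 2 \<le> n \<Longrightarrow> pmult (stransp n (i+1)) (stransp n i) \<in> perms n"
  using gen2_eq[of i n] swp_perms[of "stransp n (i+1)" n "i-1"] stransp_perm[of "i+1" n] by simp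

lemma gen1_inv: "1 \<le> j \<Longrightarrow> j + 2 \<le> n \<Longrightarrow> inversions (pmult (stransp n j) (stransp n (j+1))) = {(j, j+1), (j, j+2)}"
proof -
  assume a: "1 \<le> j" "j + 2 \<le> n"
  have p: "stransp n j \<in> perms n" using stransp_perm a by simp
  have "inversions (swp (stransp n j) j) = insert (j, j+2) {(j, j+1)}"
    using inv_swp[of "stransp n j" j] permsD[OF p] a stransp_nth[of j n j] stransp_nth[of "j+1" n j] stransp_inv[of j n] by simp
  then show ?thesis using gen1_eq a by auto
qed

lemma gen2_inv: "1 \<le> i \<Longrightarrow> i + 2 \<le> n \<Longrightarrow> inversions (pmult (stransp n (i+1)) (stransp n i)) = {(i+1, i+2), (i, i+2)}"
proof -
  assume a: "1 \<le> i" "i + 2 \<le> n"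
  have p: "stransp n (i+1) \<in> perms n" using stransp_perm a by simp
  have "inversions (swp (stransp n (i+1)) (i-1)) = insert (i, i+2) {(i+1, i+2)}"
    using inv_swp[of "stransp n (i+1)" "i-1"] permsD[OF p] a stransp_nth[of "i-1" n "i+1"] stransp_nth[of i n "i+1"] stransp_inv[of "i+1" n] by simp
  then show ?thesis using gen2_eq a by auto
qed

lemma lc_equiv: "lattice_cong n R \<Longrightarrow> equiv (perms n) R"
  unfolding lattice_cong_def by simp

lemma lc_sym: "lattice_cong n R \<Longrightarrow> (x,y) \<in> R \<Longrightarrow> (y,x) \<in> R"
  using lc_equiv equivE symD by metis

lemma lc_trans: "lattice_cong n R \<Longrightarrow> (x,y) \<in> R \<Longrightarrow> (y,z) \<in> R \<Longrightarrow> (x,z) \<in> R"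
  using lc_equiv equivE transD by metis

lemma lc_refl: "lattice_cong n R \<Longrightarrow> x \<in> perms n \<Longrightarrow> (x,x) \<in> R"
  using lc_equiv equivE refl_onD by metis

lemma lc_meet: "lattice_cong n R \<Longrightarrow> (x,y) \<in> R \<Longrightarrow> z \<in> perms n \<Longrightarrow> is_meet n x z m \<Longrightarrow> is_meet n y z m' \<Longrightarrow> (m,m') \<in> R"
  unfolding lattice_cong_def by blast

lemma lc_join: "lattice_cong n R \<Longrightarrow> (x,y) \<in> R \<Longrightarrow> z \<in> perms n \<Longrightarrow> is_join n x z m \<Longrightarrow> is_join n y z m' \<Longrightarrow> (m,m') \<in> R"
  unfolding lattice_cong_def by blast

lemma meet_le1: "a \<in> perms n \<Longrightarrow> inversions a \<subseteq> inversions b \<Longrightarrow> is_meet n a b a"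
  unfolding is_meet_def weak_le_def by auto
lemma meet_le2: "b \<in> perms n \<Longrightarrow> inversions b \<subseteq> inversions a \<Longrightarrow> is_meet n a b b"
  unfolding is_meet_def weak_le_def by auto
lemma join_le1: "b \<in> perms n \<Longrightarrow> inversions a \<subseteq> inversions b \<Longrightarrow> is_join n a b b"
  unfolding is_join_def weak_le_def by auto
lemma join_le2: "a \<in> perms n \<Longrightarrow> inversions b \<subseteq> inversions a \<Longrightarrow> is_join n a b a"
  unfolding is_join_def weak_le_def by auto

lemma meetI: "m \<in> perms n \<Longrightarrow> inversions m \<subseteq> inversions x \<Longrightarrow> inversions m \<subseteq> inversions y \<Longrightarrow>
  (\<And>w. w \<in> perms n \<Longrightarrow> inversions w \<subseteq> inversions x \<Longrightarrow> inversions w \<subseteq> inversions y \<Longrightarrow> inversions w \<subseteq> inversions m)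
  \<Longrightarrow> is_meet n x y m"
  unfolding is_meet_def weak_le_def by auto

lemma joinI: "m \<in> perms n \<Longrightarrow> inversions x \<subseteq> inversions m \<Longrightarrow> inversions y \<subseteq> inversions m \<Longrightarrow>
  (\<And>w. w \<in> perms n \<Longrightarrow> inversions x \<subseteq> inversions w \<Longrightarrow> inversions y \<subseteq> inversions w \<Longrightarrow> inversions m \<subseteq> inversions w)
  \<Longrightarrow> is_join n x y m"
  unfolding is_join_def weak_le_def by auto

lemma between:
  assumes lc: "lattice_cong n R" and uw: "(u,w) \<in> R" and v: "v \<in> perms n"
    and uv: "inversions u \<subseteq> inversions v" and vw: "inversions v \<subseteq> inversions w"
  shows "(u,v) \<in> R"
proof -
  have u: "u \<in> perms n" using uw lc_equiv[OF lc] by (auto simp: equiv_def refl_on_def)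
  have "(w,u) \<in> R" using lc_sym[OF lc uw] .
  moreover have "is_meet n w v v" by (rule meet_le2[OF v vw])
  moreover have "is_meet n u v u" by (rule meet_le1[OF u uv])
  ultimately have "(v,u) \<in> R" using lc_meet[OF lc _ v] by blast
  then show ?thesis using lc_sym[OF lc] by blast
qed

lemma swp_up: "x \<in> perms n \<Longrightarrow> p+1 < n \<Longrightarrow> x!p < x!(p+1) \<Longrightarrow>
   inversions (swp x p) = insert (x!p, x!(p+1)) (inversions x)"
  using inv_swp[of x p] permsD[of x n] by simp

lemma swp_down: "x \<in> perms n \<Longrightarrow> p+1 < n \<Longrightarrow> x!(p+1) < x!p \<Longrightarrow>
   inversions (swp x p) = inversions x - {(x!(p+1), x!p)}"
  using inv_swp[of x p] permsD[of x n] by simp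

lemma swp_down_mem: "x \<in> perms n \<Longrightarrow> p+1 < n \<Longrightarrow> x!(p+1) < x!p \<Longrightarrow> (x!(p+1), x!p) \<in> inversions x"
  using inv_nth[of x "p+1" p] permsD[of x n] by simp

lemma not_inv: "x \<in> perms n \<Longrightarrow> i < j \<Longrightarrow> j < n \<Longrightarrow> x!i < x!j \<Longrightarrow> (x!i, x!j) \<notin> inversions x"
  using inv_nth[of x i j] permsD[of x n] by simp

lemma swp_perm': "x \<in> perms n \<Longrightarrow> p+1 < n \<Longrightarrow> swp x p \<in> perms n"
  using swp_perms permsD by metis

lemma nth_swp': "x \<in> perms n \<Longrightarrow> p+1 < n \<Longrightarrow> k < n \<Longrightarrow>
  swp x p ! k = (if k = p then x!(p+1) else if k = p+1 then x!p else x!k)"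
  using nth_swp permsD by metis

lemma JF:
  assumes lc: "lattice_cong n R" and uu: "(u,u') \<in> R" and u: "u \<in> perms n" and u': "u' \<in> perms n"
    and x: "x \<in> perms n" and p: "p+1 < n" and asc: "x!p < x!(p+1)"
    and s1: "inversions u \<subseteq> inversions x" and s2: "(x!p, x!(p+1)) \<in> inversions u'"
    and s3: "inversions u' \<subseteq> insert (x!p, x!(p+1)) (inversions x)"
  shows "(x, swp x p) \<in> R"
proof -
  have X: "swp x p \<in> perms n" using swp_perm'[OF x p] .
  have IX: "inversions (swp x p) = insert (x!p, x!(p+1)) (inversions x)" using swp_up[OF x p asc] .
  have j1: "is_join n u x x" by (rule join_le1[OF x s1])
  have j2: "is_join n u' x (swp x p)"
    by (rule joinI[OF X]) (use IX s2 s3 in auto)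
  show ?thesis using lc_join[OF lc uu x j1 j2] .
qed

lemma square:
  assumes lc: "lattice_cong n R" and x: "x \<in> perms n" and p: "p+1 < n" and asc: "x!p < x!(p+1)"
    and r: "r+1 < n" and rp: "r+1 < p \<or> p+1 < r"
    and h: "(swp x r, swp (swp x r) p) \<in> R"
  shows "(x, swp x p) \<in> R"
proof -
  define x' where "x' = swp x r"
  have d: "distinct x" using permsD[OF x] by simp
  have x'p: "x' \<in> perms n" unfolding x'_def using swp_perm'[OF x r] .
  have e1: "x'!p = x!p" "x'!(p+1) = x!(p+1)" unfolding x'_def using nth_swp'[OF x r] p rp by auto
  have X: "swp x p \<in> perms n" using swp_perm'[OF x p] .
  have IX: "inversions (swp x p) = insert (x!p, x!(p+1)) (inversions x)" using swp_up[OF x p asc] .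
  have IX': "inversions (swp x' p) = insert (x!p, x!(p+1)) (inversions x')" using swp_up[OF x'p p] e1 asc by simp
  have X'p: "swp x' p \<in> perms n" using swp_perm'[OF x'p p] .
  have l: "length x = n" using permsD[OF x] by simp
  have ne1: "x!r \<noteq> x!p" by (subst nth_eq_iff_index_eq[OF d]) (use l p r rp in auto)
  have ne2: "x!r \<noteq> x!(p+1)" by (subst nth_eq_iff_index_eq[OF d]) (use l p r rp in auto)
  have ne3: "x!(r+1) \<noteq> x!p" by (subst nth_eq_iff_index_eq[OF d]) (use l p r rp in auto)
  have ne4: "x!(r+1) \<noteq> x!r" by (subst nth_eq_iff_index_eq[OF d]) (use l p r rp in auto)
  note ne = ne1 ne2 ne3 ne4
  show ?thesis
  proof (cases "x!r < x!(r+1)")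
    case True
    have Ix': "inversions x' = insert (x!r, x!(r+1)) (inversions x)" unfolding x'_def using swp_up[OF x r True] .
    have "(swp x' p, x') \<in> R" using lc_sym[OF lc h] unfolding x'_def .
    moreover have "is_meet n (swp x' p) (swp x p) (swp x p)" by (rule meet_le2[OF X]) (use IX IX' Ix' in auto)
    moreover have "is_meet n x' (swp x p) x"
      by (rule meetI[OF x]) (use IX Ix' ne in auto)
    ultimately have "(swp x p, x) \<in> R" using lc_meet[OF lc _ X] by blast
    then show ?thesis using lc_sym[OF lc] by blast
  next
    case False
    then have lt: "x!(r+1) < x!r" using ne4 by simp
    have Ix': "inversions x' = inversions x - {(x!(r+1), x!r)}" unfolding x'_def using swp_down[OF x r lt] .
    have "is_join n x' x x" by (rule join_le1[OF x]) (use Ix' in auto)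
    moreover have "is_join n (swp x' p) x (swp x p)"
      by (rule joinI[OF X]) (use IX IX' Ix' in auto)
    ultimately show ?thesis using lc_join[OF lc h[folded x'_def] x] by blast
  qed
qed

lemma hexL1:
  assumes lc: "lattice_cong n R" and x: "x \<in> perms n" and p1: "1 \<le> p" and p: "p+1 < n"
    and xd: "x!(p-1) = d" and xa: "x!p = a" and xb: "x!(p+1) = b" and ad: "a < d" and db: "d < b"
    and hy: "(swp x (p-1), swp (swp x (p-1)) p) \<in> R"
  shows "(x, swp x p) \<in> R"
proof -
  define h where "h = swp x (p-1)"
  have pp: "p - 1 + 1 = p" using p1 by simp
  have p': "p - 1 + 1 < n" using pp p by simp
  have hp: "h \<in> perms n" unfolding h_def using swp_perm'[OF x p'] .
  have hn: "h!p = d" "h!(p+1) = b" using nth_swp'[OF x p'] p p1 xd xa xb unfolding h_def by auto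
  have Ih: "inversions h = inversions x - {(a,d)}" unfolding h_def using swp_down[OF x p'] pp xd xa ad by simp
  define g where "g = swp h p"
  have Ig: "inversions g = insert (d,b) (inversions h)" unfolding g_def using swp_up[OF hp p] hn db by simp
  have gp: "g \<in> perms n" unfolding g_def using swp_perm'[OF hp p] .
  define X where "X = swp x p"
  have Xp: "X \<in> perms n" unfolding X_def using swp_perm'[OF x p] .
  have IX: "inversions X = insert (a,b) (inversions x)" unfolding X_def using swp_up[OF x p] xa xb ad db by simp
  have Xn: "X!(p-1) = d" "X!(p-1+1) = b" using nth_swp'[OF x p] p p1 xd xa xb pp unfolding X_def by auto
  define T where "T = swp X (p-1)"
  have Tp: "T \<in> perms n" unfolding T_def using swp_perm'[OF Xp p'] .
  have IT: "inversions T = insert (d,b) (inversions X)" unfolding T_def using swp_up[OF Xp p'] Xn db by simp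
  have j1: "is_join n h x x" by (rule join_le1[OF x]) (use Ih in auto)
  have j2: "is_join n g x T"
  proof (rule joinI[OF Tp])
    show "inversions g \<subseteq> inversions T" using Ig Ih IT IX by auto
    show "inversions x \<subseteq> inversions T" using IT IX by auto
    fix w assume w: "w \<in> perms n" and gw: "inversions g \<subseteq> inversions w" and xw: "inversions x \<subseteq> inversions w"
    have "(d,b) \<in> inversions w" using gw Ig by auto
    moreover have "(a,d) \<in> inversions w" using xw swp_down_mem[OF x p'] pp xd xa ad by auto
    ultimately have "(a,b) \<in> inversions w" using inv_trans[OF w] by blast
    then show "inversions T \<subseteq> inversions w" using IT IX gw Ig xw by auto
  qed
  have "(h, g) \<in> R" using hy unfolding h_def g_def .
  then have "(x, T) \<in> R" using lc_join[OF lc _ x j1 j2] by blast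
  then have "(x, X) \<in> R" by (rule between[OF lc _ Xp]) (use IX IT in auto)
  then show ?thesis unfolding X_def .
qed

lemma hexL2:
  assumes lc: "lattice_cong n R" and x: "x \<in> perms n" and p1: "1 \<le> p" and p: "p+1 < n"
    and xd: "x!(p-1) = d" and xa: "x!p = a" and xb: "x!(p+1) = b" and ad: "a < d" and db: "d < b"
    and hy: "(swp (swp (swp x (p-1)) p) (p-1), swp (swp (swp (swp x (p-1)) p) (p-1)) p) \<in> R"
  shows "(x, swp x p) \<in> R"
proof -
  define h where "h = swp x (p-1)"
  have pp: "p - 1 + 1 = p" using p1 by simp
  have p': "p - 1 + 1 < n" using pp p by simp
  have hp: "h \<in> perms n" unfolding h_def using swp_perm'[OF x p'] .
  have hn: "h!(p-1) = a" "h!p = d" "h!(p+1) = b" using nth_swp'[OF x p'] p p1 xd xa xb unfolding h_def by auto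
  have Ih: "inversions h = inversions x - {(a,d)}" unfolding h_def using swp_down[OF x p'] pp xd xa ad by simp
  define g where "g = swp h p"
  have Ig: "inversions g = insert (d,b) (inversions h)" unfolding g_def using swp_up[OF hp p] hn db by simp
  have gp: "g \<in> perms n" unfolding g_def using swp_perm'[OF hp p] .
  have gn: "g!(p-1) = a" "g!(p-1+1) = b" "g!(p+1) = d" using nth_swp'[OF hp p] p p1 hn pp unfolding g_def by auto
  define t where "t = swp g (p-1)"
  have tp: "t \<in> perms n" unfolding t_def using swp_perm'[OF gp p'] .
  have It: "inversions t = insert (a,b) (inversions g)" unfolding t_def using swp_up[OF gp p'] gn ad db by simp
  have tn: "t!p = a" "t!(p+1) = d" using nth_swp'[OF gp p'] p p1 gn pp unfolding t_def by auto
  define T where "T = swp t p"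
  have Tp: "T \<in> perms n" unfolding T_def using swp_perm'[OF tp p] .
  have IT: "inversions T = insert (a,d) (inversions t)" unfolding T_def using swp_up[OF tp p] tn ad by simp
  define X where "X = swp x p"
  have Xp: "X \<in> perms n" unfolding X_def using swp_perm'[OF x p] .
  have IX: "inversions X = insert (a,b) (inversions x)" unfolding X_def using swp_up[OF x p] xa xb ad db by simp
  have adx: "(a,d) \<in> inversions x" using swp_down_mem[OF x p'] pp xd xa ad by auto
  have dbx: "(d,b) \<notin> inversions x" using not_inv[OF x, of "p-1" "p+1"] p p1 xd xb db by auto
  have abx: "(a,b) \<notin> inversions x" using not_inv[OF x, of p "p+1"] p xa xb ad db by auto
  have "(T, t) \<in> R" using lc_sym[OF lc hy] unfolding T_def t_def g_def h_def .
  moreover have "is_meet n T X X" by (rule meet_le2[OF Xp]) (use IX IT It Ig Ih adx in auto)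
  moreover have "is_meet n t X h"
  proof (rule meetI[OF hp])
    show "inversions h \<subseteq> inversions t" using It Ig by auto
    show "inversions h \<subseteq> inversions X" using IX Ih by auto
    fix w assume w: "w \<in> perms n" and wt: "inversions w \<subseteq> inversions t" and wX: "inversions w \<subseteq> inversions X"
    have "(a,b) \<notin> inversions w"
    proof
      assume "(a,b) \<in> inversions w"
      then have "(a,d) \<in> inversions w \<or> (d,b) \<in> inversions w" using inv_cotrans[OF w] ad db by blast
      then show False
      proof
        assume "(a,d) \<in> inversions w"
        then have "(a,d) \<in> inversions t" using wt by auto
        then show False using It Ig Ih ad db by auto
      next
        assume "(d,b) \<in> inversions w"
        then have "(d,b) \<in> inversions X" using wX by auto
        then show False using IX dbx ad by auto
      qed
    qed
    then show "inversions w \<subseteq> inversions h" using wt wX It Ig Ih IX ad db by auto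
  qed
  ultimately have "(X, h) \<in> R" using lc_meet[OF lc _ Xp] by blast
  then have hX: "(h, X) \<in> R" using lc_sym[OF lc] by blast
  have "(h, x) \<in> R" by (rule between[OF lc hX x]) (use Ih IX in auto)
  then have "(x, h) \<in> R" using lc_sym[OF lc] by blast
  then have "(x, X) \<in> R" using lc_trans[OF lc _ hX] by blast
  then show ?thesis unfolding X_def .
qed

lemma hexR1:
  assumes lc: "lattice_cong n R" and x: "x \<in> perms n" and p: "p+2 < n"
    and xa: "x!p = a" and xb: "x!(p+1) = b" and xf: "x!(p+2) = f" and af: "a < f" and fb: "f < b"
    and hy: "(swp x (p+1), swp (swp x (p+1)) p) \<in> R"
  shows "(x, swp x p) \<in> R"
proof -
  have p0: "p + 1 < n" and p2: "p + 1 + 1 < n" using p by auto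
  define h where "h = swp x (p+1)"
  have hp: "h \<in> perms n" unfolding h_def using swp_perm'[OF x p2] .
  have hn: "h!p = a" "h!(p+1) = f" "h!(p+2) = b" using nth_swp'[OF x p2] p xa xb xf unfolding h_def by auto
  have Ih: "inversions h = inversions x - {(f,b)}" unfolding h_def using swp_down[OF x p2] xb xf fb by simp
  define g where "g = swp h p"
  have Ig: "inversions g = insert (a,f) (inversions h)" unfolding g_def using swp_up[OF hp p0] hn af by simp
  define X where "X = swp x p"
  have Xp: "X \<in> perms n" unfolding X_def using swp_perm'[OF x p0] .
  have IX: "inversions X = insert (a,b) (inversions x)" unfolding X_def using swp_up[OF x p0] xa xb af fb by simp
  have Xn: "X!(p+1) = a" "X!(p+1+1) = f" using nth_swp'[OF x p0] p xa xb xf unfolding X_def by auto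
  define T where "T = swp X (p+1)"
  have Tp: "T \<in> perms n" unfolding T_def using swp_perm'[OF Xp p2] .
  have IT: "inversions T = insert (a,f) (inversions X)" unfolding T_def using swp_up[OF Xp p2] Xn af by simp
  have fbx: "(f,b) \<in> inversions x" using swp_down_mem[OF x p2] xb xf fb by auto
  have j1: "is_join n h x x" by (rule join_le1[OF x]) (use Ih in auto)
  have j2: "is_join n g x T"
  proof (rule joinI[OF Tp])
    show "inversions g \<subseteq> inversions T" using Ig Ih IT IX by auto
    show "inversions x \<subseteq> inversions T" using IT IX by auto
    fix w assume w: "w \<in> perms n" and gw: "inversions g \<subseteq> inversions w" and xw: "inversions x \<subseteq> inversions w"
    have "(a,f) \<in> inversions w" using gw Ig by auto
    moreover have "(f,b) \<in> inversions w" using xw fbx by auto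
    ultimately have "(a,b) \<in> inversions w" using inv_trans[OF w] by blast
    then show "inversions T \<subseteq> inversions w" using IT IX gw Ig xw by auto
  qed
  have "(h, g) \<in> R" using hy unfolding h_def g_def .
  then have "(x, T) \<in> R" using lc_join[OF lc _ x j1 j2] by blast
  then have "(x, X) \<in> R" by (rule between[OF lc _ Xp]) (use IX IT in auto)
  then show ?thesis unfolding X_def .
qed

lemma hexR2:
  assumes lc: "lattice_cong n R" and x: "x \<in> perms n" and p: "p+2 < n"
    and xa: "x!p = a" and xb: "x!(p+1) = b" and xf: "x!(p+2) = f" and af: "a < f" and fb: "f < b"
    and hy: "(swp (swp (swp x (p+1)) p) (p+1), swp (swp (swp (swp x (p+1)) p) (p+1)) p) \<in> R"
  shows "(x, swp x p) \<in> R"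
proof -
  have p0: "p + 1 < n" and p2: "p + 1 + 1 < n" using p by auto
  define h where "h = swp x (p+1)"
  have hp: "h \<in> perms n" unfolding h_def using swp_perm'[OF x p2] .
  have hn: "h!p = a" "h!(p+1) = f" "h!(p+2) = b" using nth_swp'[OF x p2] p xa xb xf unfolding h_def by auto
  have Ih: "inversions h = inversions x - {(f,b)}" unfolding h_def using swp_down[OF x p2] xb xf fb by simp
  define g where "g = swp h p"
  have gp: "g \<in> perms n" unfolding g_def using swp_perm'[OF hp p0] .
  have Ig: "inversions g = insert (a,f) (inversions h)" unfolding g_def using swp_up[OF hp p0] hn af by simp
  have gn: "g!p = f" "g!(p+1) = a" "g!(p+1+1) = b" using nth_swp'[OF hp p0] p hn unfolding g_def by auto
  define t where "t = swp g (p+1)"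
  have tp: "t \<in> perms n" unfolding t_def using swp_perm'[OF gp p2] .
  have It: "inversions t = insert (a,b) (inversions g)" unfolding t_def using swp_up[OF gp p2] gn af fb by simp
  have tn: "t!p = f" "t!(p+1) = b" using nth_swp'[OF gp p2] p gn unfolding t_def by auto
  define T where "T = swp t p"
  have IT: "inversions T = insert (f,b) (inversions t)" unfolding T_def using swp_up[OF tp p0] tn fb by simp
  define X where "X = swp x p"
  have Xp: "X \<in> perms n" unfolding X_def using swp_perm'[OF x p0] .
  have IX: "inversions X = insert (a,b) (inversions x)" unfolding X_def using swp_up[OF x p0] xa xb af fb by simp
  have fbx: "(f,b) \<in> inversions x" using swp_down_mem[OF x p2] xb xf fb by auto
  have afx: "(a,f) \<notin> inversions x" using not_inv[OF x, of p "p+2"] p xa xf af by auto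
  have "(T, t) \<in> R" using lc_sym[OF lc hy] unfolding T_def t_def g_def h_def .
  moreover have "is_meet n T X X" by (rule meet_le2[OF Xp]) (use IX IT It Ig Ih fbx in auto)
  moreover have "is_meet n t X h"
  proof (rule meetI[OF hp])
    show "inversions h \<subseteq> inversions t" using It Ig by auto
    show "inversions h \<subseteq> inversions X" using IX Ih by auto
    fix w assume w: "w \<in> perms n" and wt: "inversions w \<subseteq> inversions t" and wX: "inversions w \<subseteq> inversions X"
    have "(a,b) \<notin> inversions w"
    proof
      assume "(a,b) \<in> inversions w"
      then have "(a,f) \<in> inversions w \<or> (f,b) \<in> inversions w" using inv_cotrans[OF w] af fb by blast
      then show False
      proof
        assume "(a,f) \<in> inversions w"
        then have "(a,f) \<in> inversions X" using wX by auto
        then show False using IX afx fb by auto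
      next
        assume "(f,b) \<in> inversions w"
        then have "(f,b) \<in> inversions t" using wt by auto
        then show False using It Ig Ih af fb by auto
      qed
    qed
    then show "inversions w \<subseteq> inversions h" using wt wX It Ig Ih IX af fb by auto
  qed
  ultimately have "(X, h) \<in> R" using lc_meet[OF lc _ Xp] by blast
  then have hX: "(h, X) \<in> R" using lc_sym[OF lc] by blast
  have "(h, x) \<in> R" by (rule between[OF lc hX x]) (use Ih IX in auto)
  then have "(x, h) \<in> R" using lc_sym[OF lc] by blast
  then have "(x, X) \<in> R" using lc_trans[OF lc _ hX] by blast
  then show ?thesis unfolding X_def .
qed

definition wit :: "(nat \<Rightarrow> bool) \<Rightarrow> nat list \<Rightarrow> nat \<Rightarrow> bool" where
  "wit up x p \<longleftrightarrow> (\<exists>q<length x. x!p < x!q \<and> x!q < x!(p+1) \<and> ((q < p \<and> up (x!q)) \<or> (p+1 < q \<and> \<not> up (x!q))))"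

lemma witI: "q < length x \<Longrightarrow> x!p < c \<Longrightarrow> c < x!(p+1) \<Longrightarrow> x!q = c \<Longrightarrow> (q < p \<and> up c \<or> p+1 < q \<and> \<not> up c) \<Longrightarrow> wit up x p"
  unfolding wit_def by blast

lemma bringL:
  assumes lc: "lattice_cong n R"
    and IH0: "\<forall>y p'. y \<in> perms n \<longrightarrow> p'+1 < n \<longrightarrow> y!p' < y!(p'+1) \<longrightarrow> y!(p'+1) - y!p' < b - a \<longrightarrow> wit up y p' \<longrightarrow> (y, swp y p') \<in> R"
    and p: "p+1 < n" and ac: "a < c" "c < b" and ad: "a < d" "d < b" and dc: "d \<noteq> c"
  shows "y \<in> perms n \<Longrightarrow> y!p = a \<Longrightarrow> y!(p+1) = b \<Longrightarrow> q < n \<Longrightarrow> y!q = c \<Longrightarrow> (q < p \<and> up c \<or> p+1 < q \<and> \<not> up c)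
     \<Longrightarrow> m < p \<Longrightarrow> y!(p-1-m) = d \<Longrightarrow> (y, swp y p) \<in> R"
proof (induction m arbitrary: y q)
  note IH = IH0[rule_format]
  case 0
  have y: "y \<in> perms n" and ya: "y!p = a" and yb: "y!(p+1) = b" and q: "q < n" and yc: "y!q = c"
    and side: "q < p \<and> up c \<or> p+1 < q \<and> \<not> up c" using 0 by auto
  have p1: "1 \<le> p" using 0 by simp
  have yd: "y!(p-1) = d" using 0 by simp
  have pp: "p - 1 + 1 = p" using p1 by simp
  have p': "p - 1 + 1 < n" using pp p by simp
  have qne: "q \<noteq> p-1" "q \<noteq> p" "q \<noteq> p+1" using yd yc ya yb dc ac by auto
  define h where "h = swp y (p-1)"
  have hp: "h \<in> perms n" unfolding h_def using swp_perm'[OF y p'] .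
  have hn: "h!p = d" "h!(p+1) = b" "h!(p-1) = a" "h!q = c"
    using nth_swp'[OF y p'] p p1 yd ya yb q qne yc unfolding h_def by auto
  show ?case
  proof (cases "d < c")
    case True
    have "(h, swp h p) \<in> R"
    proof (rule IH[OF hp p])
      show "h!p < h!(p+1)" using hn ad by simp
      show "h!(p+1) - h!p < b - a" using hn ad by simp
      show "wit up h p" by (rule witI[of q _ _ c]) (use hn q side True ac perms_length[OF hp] in auto)
    qed
    then show ?thesis using hexL1[OF lc y p1 p yd ya yb ad] unfolding h_def by blast
  next
    case False
    then have cd: "c < d" using dc by simp
    define g where "g = swp h p"
    have gp: "g \<in> perms n" unfolding g_def using swp_perm'[OF hp p] .
    have gn: "g!(p-1) = a" "g!p = b" "g!(p+1) = d" "g!q = c"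
      using nth_swp'[OF hp p] p p1 hn q qne unfolding g_def by auto
    define t where "t = swp g (p-1)"
    have tp: "t \<in> perms n" unfolding t_def using swp_perm'[OF gp p'] .
    have tn: "t!p = a" "t!(p+1) = d" "t!q = c"
      using nth_swp'[OF gp p'] p p1 gn q qne pp unfolding t_def by auto
    have "(t, swp t p) \<in> R"
    proof (rule IH[OF tp p])
      show "t!p < t!(p+1)" using tn ad by simp
      show "t!(p+1) - t!p < b - a" using tn ad by simp
      show "wit up t p" by (rule witI[of q _ _ c]) (use tn q side cd ac perms_length[OF tp] in auto)
    qed
    then show ?thesis using hexL2[OF lc y p1 p yd ya yb ad] unfolding t_def g_def h_def by blast
  qed
next
  case (Suc m)
  have y: "y \<in> perms n" and ya: "y!p = a" and yb: "y!(p+1) = b" and q: "q < n" and yc: "y!q = c"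
    and side: "q < p \<and> up c \<or> p+1 < q \<and> \<not> up c" and mp: "Suc m < p" using Suc.prems by auto
  define r where "r = p - 2 - m"
  have r1: "r + 1 = p - 1 - m" "r + 1 < p" "r + 1 < n" using mp p unfolding r_def by auto
  have yr: "y!r = d" using Suc.prems r1 unfolding r_def by (simp add: numeral_2_eq_2)
  define y' where "y' = swp y r"
  have y'p: "y' \<in> perms n" unfolding y'_def using swp_perm'[OF y r1(3)] .
  have y'n: "y'!p = a" "y'!(p+1) = b" "y'!(p-1-m) = d"
    using nth_swp'[OF y r1(3)] r1 p ya yb yr unfolding y'_def by auto
  define q' where "q' = (if q = r then r+1 else if q = r+1 then r else q)"
  have q': "q' < n" "y'!q' = c" "q' < p \<and> up c \<or> p+1 < q' \<and> \<not> up c"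
    using nth_swp'[OF y r1(3)] q yc side r1 unfolding q'_def y'_def by auto
  have "(y', swp y' p) \<in> R" using Suc.IH[OF y'p y'n(1,2) q'(1,2,3) _ y'n(3)] mp by simp
  then show ?case using square[OF lc y p _ r1(3)] ya yb ac r1 unfolding y'_def by auto
qed

lemma bringR:
  assumes lc: "lattice_cong n R"
    and IH0: "\<forall>y p'. y \<in> perms n \<longrightarrow> p'+1 < n \<longrightarrow> y!p' < y!(p'+1) \<longrightarrow> y!(p'+1) - y!p' < b - a \<longrightarrow> wit up y p' \<longrightarrow> (y, swp y p') \<in> R"
    and p: "p+1 < n" and ac: "a < c" "c < b" and ad: "a < d" "d < b" and dc: "d \<noteq> c"
  shows "y \<in> perms n \<Longrightarrow> y!p = a \<Longrightarrow> y!(p+1) = b \<Longrightarrow> q < n \<Longrightarrow> y!q = c \<Longrightarrow> (q < p \<and> up c \<or> p+1 < q \<and> \<not> up c)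
     \<Longrightarrow> p+2+m < n \<Longrightarrow> y!(p+2+m) = d \<Longrightarrow> (y, swp y p) \<in> R"
proof (induction m arbitrary: y q)
  note IH = IH0[rule_format]
  case 0
  have y: "y \<in> perms n" and ya: "y!p = a" and yb: "y!(p+1) = b" and q: "q < n" and yc: "y!q = c"
    and side: "q < p \<and> up c \<or> p+1 < q \<and> \<not> up c" and p2: "p+2 < n" and yd: "y!(p+2) = d" using 0 by auto
  have p0: "p + 1 < n" and p2': "p + 1 + 1 < n" using p2 by auto
  have qne: "q \<noteq> p+2" "q \<noteq> p" "q \<noteq> p+1" using yd yc ya yb dc ac by auto
  define h where "h = swp y (p+1)"
  have hp: "h \<in> perms n" unfolding h_def using swp_perm'[OF y p2'] .
  have hn: "h!p = a" "h!(p+1) = d" "h!(p+2) = b" "h!q = c"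
    using nth_swp'[OF y p2'] p2 yd ya yb q qne yc unfolding h_def by auto
  show ?case
  proof (cases "c < d")
    case True
    have "(h, swp h p) \<in> R"
    proof (rule IH[OF hp p])
      show "h!p < h!(p+1)" using hn ad by simp
      show "h!(p+1) - h!p < b - a" using hn ad by simp
      show "wit up h p" by (rule witI[of q _ _ c]) (use hn q side True ac perms_length[OF hp] in auto)
    qed
    then show ?thesis using hexR1[OF lc y p2 ya yb yd ad(1) ad(2)] unfolding h_def by blast
  next
    case False
    then have cd: "d < c" using dc by simp
    define g where "g = swp h p"
    have gp: "g \<in> perms n" unfolding g_def using swp_perm'[OF hp p] .
    have gn: "g!p = d" "g!(p+1) = a" "g!(p+1+1) = b" "g!q = c"
      using nth_swp'[OF hp p] p2 hn q qne unfolding g_def by auto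
    define t where "t = swp g (p+1)"
    have tp: "t \<in> perms n" unfolding t_def using swp_perm'[OF gp p2'] .
    have tn: "t!p = d" "t!(p+1) = b" "t!q = c"
      using nth_swp'[OF gp p2'] p2 gn q qne unfolding t_def by auto
    have "(t, swp t p) \<in> R"
    proof (rule IH[OF tp p])
      show "t!p < t!(p+1)" using tn ad by simp
      show "t!(p+1) - t!p < b - a" using tn ad by simp
      show "wit up t p" by (rule witI[of q _ _ c]) (use tn q side cd ac perms_length[OF tp] in auto)
    qed
    then show ?thesis using hexR2[OF lc y p2 ya yb yd ad(1) ad(2)] unfolding t_def g_def h_def by blast
  qed
next
  case (Suc m)
  have y: "y \<in> perms n" and ya: "y!p = a" and yb: "y!(p+1) = b" and q: "q < n" and yc: "y!q = c"
    and side: "q < p \<and> up c \<or> p+1 < q \<and> \<not> up c" and mp: "p + 2 + Suc m < n" using Suc.prems by auto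
  define r where "r = p + 2 + m"
  have r1: "r + 1 = p + 2 + Suc m" "p + 1 < r" "r + 1 < n" using mp p unfolding r_def by auto
  have yr: "y!(r+1) = d" using Suc.prems r1 by simp
  define y' where "y' = swp y r"
  have y'p: "y' \<in> perms n" unfolding y'_def using swp_perm'[OF y r1(3)] .
  have y'n: "y'!p = a" "y'!(p+1) = b" "y'!(p+2+m) = d"
    using nth_swp'[OF y r1(3)] r1 p ya yb yr unfolding y'_def r_def by auto
  define q' where "q' = (if q = r then r+1 else if q = r+1 then r else q)"
  have q': "q' < n" "y'!q' = c" "q' < p \<and> up c \<or> p+1 < q' \<and> \<not> up c"
    using nth_swp'[OF y r1(3)] q yc side r1 unfolding q'_def y'_def by auto
  have "(y', swp y' p) \<in> R" using Suc.IH[OF y'p y'n(1,2) q'(1,2,3) _ y'n(3)] mp by simp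
  then show ?case using square[OF lc y p _ r1(3)] ya yb ac r1 unfolding y'_def by auto
qed

lemma force:
  assumes lc: "lattice_cong n R"
    and gen: "\<forall>i j. E i j \<longrightarrow> (stransp n j, pmult (stransp n j) (stransp n i)) \<in> R"
    and ori: "orientation n E"
    and upE: "\<forall>b. 2 \<le> b \<and> b \<le> n - 1 \<longrightarrow> (up b \<longleftrightarrow> E b (b - 1))"
  shows "x \<in> perms n \<Longrightarrow> p+1 < n \<Longrightarrow> x!p < x!(p+1) \<Longrightarrow> wit up x p \<Longrightarrow> (x, swp x p) \<in> R"
proof (induction "x!(p+1) - x!p" arbitrary: x p rule: less_induct)
  case less
  have x: "x \<in> perms n" and p: "p+1 < n" and asc: "x!p < x!(p+1)" and w: "wit up x p" using less.prems by auto
  have lx: "length x = n" using permsD[OF x] by simp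
  define a where "a = x!p"
  define b where "b = x!(p+1)"
  obtain q where q: "q < n" "a < x!q" "x!q < b" "q < p \<and> up (x!q) \<or> p+1 < q \<and> \<not> up (x!q)"
    using w lx unfolding wit_def a_def b_def by blast
  define c where "c = x!q"
  have ab: "1 \<le> a" "b \<le> n" using perm_nth_bound[OF x, of p] perm_nth_bound[OF x, of "p+1"] p unfolding a_def b_def by auto
  have IH: "\<forall>y p'. y \<in> perms n \<longrightarrow> p'+1 < n \<longrightarrow> y!p' < y!(p'+1) \<longrightarrow> y!(p'+1) - y!p' < b - a \<longrightarrow> wit up y p' \<longrightarrow> (y, swp y p') \<in> R"
    using less.hyps unfolding a_def b_def by blast
  show ?case
  proof (cases "b = a + 2")
    case True
    then have c: "c = a + 1" using q unfolding c_def by simp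
    show ?thesis
    proof (cases "q < p \<and> up c")
      case True
      have "up (a+1)" using True c by simp
      then have E1: "E (a+1) a" using upE ab c q unfolding c_def by auto
      have g: "(stransp n a, pmult (stransp n a) (stransp n (a+1))) \<in> R" using gen E1 by blast
      have a2: "a + 2 \<le> n" using \<open>b = a + 2\<close> ab by simp
      show ?thesis
      proof (rule JF[OF lc g stransp_perm gen1_perm x p asc])
        show "1 \<le> a" "a + 1 \<le> n" "1 \<le> a" "a + 2 \<le> n" using ab a2 by auto
        have "(x!p, x!q) \<in> inversions x" using inv_nth[of x p q] permsD[OF x] True q p unfolding c_def a_def by auto
        then show "inversions (stransp n a) \<subseteq> inversions x" using stransp_inv[of a n] ab a2 c unfolding a_def c_def by auto
        show "(x!p, x!(p+1)) \<in> inversions (pmult (stransp n a) (stransp n (a+1)))"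
          using gen1_inv[of a n] ab a2 \<open>b = a + 2\<close> unfolding a_def b_def by auto
        have "(x!p, x!q) \<in> inversions x" using inv_nth[of x p q] permsD[OF x] True q p unfolding c_def a_def by auto
        then show "inversions (pmult (stransp n a) (stransp n (a+1))) \<subseteq> insert (x!p, x!(p+1)) (inversions x)"
          using gen1_inv[of a n] ab a2 \<open>b = a + 2\<close> c unfolding a_def b_def c_def by auto
      qed
    next
      case False
      then have side: "p+1 < q" "\<not> up (a+1)" using q c unfolding c_def by auto
      have a2: "a + 2 \<le> n" using \<open>b = a + 2\<close> ab by simp
      have "\<not> E (a+1) a" using upE ab side a2 by auto
      then have E1: "E a (a+1)" using ori ab a2 unfolding orientation_def by auto
      have g: "(stransp n (a+1), pmult (stransp n (a+1)) (stransp n a)) \<in> R" using gen E1 by blast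
      have qb: "(x!q, x!(p+1)) \<in> inversions x" using inv_nth[of x q "p+1"] permsD[OF x] side q p unfolding b_def by auto
      show ?thesis
      proof (rule JF[OF lc g stransp_perm gen2_perm x p asc])
        show "1 \<le> a + 1" "a + 1 + 1 \<le> n" "1 \<le> a" "a + 2 \<le> n" using ab a2 by auto
        show "inversions (stransp n (a+1)) \<subseteq> inversions x" using stransp_inv[of "a+1" n] ab a2 c qb \<open>b = a + 2\<close> unfolding a_def b_def c_def by auto
        show "(x!p, x!(p+1)) \<in> inversions (pmult (stransp n (a+1)) (stransp n a))"
          using gen2_inv[of a n] ab a2 \<open>b = a + 2\<close> unfolding a_def b_def by auto
        show "inversions (pmult (stransp n (a+1)) (stransp n a)) \<subseteq> insert (x!p, x!(p+1)) (inversions x)"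
          using gen2_inv[of a n] ab a2 \<open>b = a + 2\<close> c qb unfolding a_def b_def c_def by auto
      qed
    qed
  next
    case False
    have ac: "a < c" "c < b" using q unfolding c_def by auto
    then have big: "a + 2 < b" using False by auto
    define d where "d = (if c = a + 1 then a + 2 else a + 1)"
    have ad: "a < d" "d < b" "d \<noteq> c" using big ac unfolding d_def by auto
    obtain r where r: "r < n" "x!r = d" using perm_val[OF x, of d] ad ab by auto
    have rne: "r \<noteq> p" "r \<noteq> p+1" using r ad unfolding a_def b_def by auto
    have side: "q < p \<and> up c \<or> p+1 < q \<and> \<not> up c" using q unfolding c_def by simp
    show ?thesis
    proof (cases "r < p")
      case True
      have "x!(p - 1 - (p - 1 - r)) = d" using True r by (simp add: diff_diff_cancel)
      have m1: "p - 1 - r < p" using True by simp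
      show ?thesis
        by (rule bringL[where up = up and y = x and q = q and m = "p - 1 - r", OF lc IH p ac ad x a_def[symmetric] b_def[symmetric] q(1) c_def[symmetric] side m1]) fact
    next
      case False
      then have "p + 1 < r" using rne by simp
      then have e: "p + 2 + (r - p - 2) = r" by simp
      have m1: "p + 2 + (r - p - 2) < n" using e r by simp
      have m2: "x!(p + 2 + (r - p - 2)) = d" by (simp only: e r(2))
      show ?thesis
        by (rule bringR[where up = up and y = x and q = q and m = "r - p - 2", OF lc IH p ac ad x a_def[symmetric] b_def[symmetric] q(1) c_def[symmetric] side m1 m2])
    qed
  qed
qed

lemma swp_swp: "p+1 < length x \<Longrightarrow> swp (swp x p) p = x"
  by (rule nth_equalityI) (auto simp: nth_swp)

lemma cc_JK:
  assumes x: "x \<in> perms n" and p: "p+1 < n" and asc: "x!p < x!(p+1)" and w: "wit up x p"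
  shows "Jset up (inversions (swp x p)) = Jset up (inversions x) \<and>
         Kset up n (inversions (swp x p)) = Kset up n (inversions x)"
proof -
  have lx: "length x = n" using permsD[OF x] by simp
  define a where "a = x!p"
  define b where "b = x!(p+1)"
  obtain q where q: "q < n" "a < x!q" "x!q < b" "q < p \<and> up (x!q) \<or> p+1 < q \<and> \<not> up (x!q)"
    using w lx unfolding wit_def a_def b_def by blast
  define c where "c = x!q"
  have b_n: "b \<le> n" "1 \<le> a" using perm_nth_bound[OF x, of "p+1"] perm_nth_bound[OF x, of p] p unfolding a_def b_def by auto
  have Iy: "inversions (swp x p) = insert (a,b) (inversions x)" using swp_up[OF x p asc] unfolding a_def b_def .
  have abx: "(a,b) \<notin> inversions x" using not_inv[OF x, of p "p+1"] p asc unfolding a_def b_def by simp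
  have notJ: "(a,b) \<notin> Jset up (inversions (swp x p))"
  proof
    assume ab: "(a,b) \<in> Jset up (inversions (swp x p))"
    show False
    proof (cases "q < p \<and> up c")
      case True
      then have "(c,b) \<in> Jset up (inversions (swp x p))" using J_memD[OF ab] q unfolding c_def by auto
      then have "(c,b) \<in> inversions (swp x p)" using J_sub by blast
      moreover have "(c,b) \<notin> inversions x" using not_inv[OF x, of q "p+1"] True q p unfolding b_def c_def by simp
      moreover have "c \<noteq> a" using q unfolding c_def by simp
      ultimately show False using Iy by simp
    next
      case False
      then have s: "p+1 < q" "\<not> up c" using q unfolding c_def by auto
      then have "(a,c) \<in> Jset up (inversions (swp x p))" using J_memD[OF ab] q unfolding c_def by auto
      then have "(a,c) \<in> inversions (swp x p)" using J_sub by blast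
      moreover have "(a,c) \<notin> inversions x" using not_inv[OF x, of p q] s q unfolding a_def c_def by simp
      moreover have "c \<noteq> b" using q unfolding c_def by simp
      ultimately show False using Iy by simp
    qed
  qed
  have "inversions (swp x p) - {(a,b)} = inversions x" using Iy abx by auto
  then have J: "Jset up (inversions (swp x p)) = Jset up (inversions x)" using J_remove[OF notJ] by simp
  have "(a,b) \<in> Kset up n (inversions x)"
  proof (cases "q < p \<and> up c")
    case True
    have "(x!p, x!q) \<in> inversions x" using inv_nth[of x p q] permsD[OF x] True q p unfolding c_def a_def by auto
    then have "(a,c) \<in> Kset up n (inversions x)" using Kset.Kbase unfolding a_def c_def by blast
    then show ?thesis using Kset.Kup[of a c up n "inversions x" b] q True b_n unfolding c_def by auto
  next
    case False
    then have s: "p+1 < q" "\<not> up c" using q unfolding c_def by auto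
    have "(x!q, x!(p+1)) \<in> inversions x" using inv_nth[of x q "p+1"] permsD[OF x] s q p unfolding b_def by auto
    then have "(c,b) \<in> Kset up n (inversions x)" using Kset.Kbase unfolding b_def c_def by blast
    then show ?thesis using Kset.Kdown[of c b up n "inversions x" a] q s b_n unfolding c_def by auto
  qed
  then have K: "Kset up n (inversions (swp x p)) = Kset up n (inversions x)" using K_insert Iy by metis
  show ?thesis using J K by simp
qed

lemma avoider_J:
  assumes x: "x \<in> avoiders n up"
  shows "Jset up (inversions x) = inversions x"
proof (rule J_full)
  have xp: "x \<in> perms n" and n1: "\<not> contains_bar231 up x" and n2: "\<not> contains_312under up x"
    using x unfolding avoiders_def by auto
  have d: "distinct x" and lx: "length x = n" using permsD[OF xp] by auto
  fix a b c assume ab: "(a,b) \<in> inversions x" and ac: "a < c" "c < b"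
  obtain k j where kj: "k < n" "j < n" "a = x!k" "b = x!j" "j < k" using inv_elem[OF ab] lx by auto
  have "1 \<le> c" "c \<le> n" using inv_bound[OF xp ab] ac by auto
  then obtain i where i: "i < n" "x!i = c" using perm_val[OF xp] by blast
  have ij: "i \<noteq> j" "i \<noteq> k" using i kj ac by auto
  {
    assume upc: "up c"
    have "\<not> i < j"
    proof
      assume "i < j"
      then have "contains_bar231 up x" unfolding contains_bar231_def
        using kj i ac upc lx by (intro exI[of _ i] exI[of _ j] exI[of _ k]) auto
      then show False using n1 by simp
    qed
    then have "j < i" using ij by simp
    then show "(c,b) \<in> inversions x" using inv_nth[OF d, of i j] i kj lx ac by auto
  }
  {
    assume upc: "\<not> up c"
    have "\<not> k < i"
    proof
      assume "k < i"
      then have "contains_312under up x" unfolding contains_312under_def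
        using kj i ac upc lx by (intro exI[of _ j] exI[of _ k] exI[of _ i]) auto
      then show False using n2 by simp
    qed
    then have "i < k" using ij by simp
    then show "(a,c) \<in> inversions x" using inv_nth[OF d, of k i] i kj lx ac by auto
  }
qed

lemma nonavoider_desc:
  assumes x: "x \<in> perms n" and na: "x \<notin> avoiders n up"
  shows "\<exists>p. p+1 < n \<and> x!(p+1) < x!p \<and> wit up (swp x p) p"
proof -
  have d: "distinct x" and lx: "length x = n" using permsD[OF x] by auto
  have "contains_bar231 up x \<or> contains_312under up x" using na x unfolding avoiders_def by auto
  then show ?thesis
  proof
    assume "contains_bar231 up x"
    then obtain i j k where h: "i < j" "j < k" "k < length x" "x!k < x!i" "x!i < x!j" "up (x!i)"
      unfolding contains_bar231_def by blast
    obtain p where pp: "i < p" "p+1 < length x" "x!(p+1) < x!i" "x!i < x!p"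
      using pat_desc[OF d h(3) h(1,2,4,5)] by blast
    have "wit up (swp x p) p"
      by (rule witI[of i _ _ "x!i"]) (use pp h nth_swp[of p x] lx in auto)
    then show ?thesis using pp lx by (intro exI[of _ p]) auto
  next
    assume "contains_312under up x"
    then obtain i j k where h: "i < j" "j < k" "k < length x" "x!j < x!k" "x!k < x!i" "\<not> up (x!k)"
      unfolding contains_312under_def by blast
    obtain p where pp: "p+1 < k" "x!(p+1) < x!k" "x!k < x!p"
      using pat_desc2[OF d h(3) h(1,2,4,5)] by blast
    have "wit up (swp x p) p"
      by (rule witI[of k _ _ "x!k"]) (use pp h nth_swp[of p x] lx in auto)
    then show ?thesis using pp h lx by (intro exI[of _ p]) auto
  qed
qed

lemma nonclosed_asc:
  assumes x: "x \<in> perms n" and nc: "Kset up n (inversions x) \<noteq> inversions x"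
  shows "\<exists>p. p+1 < n \<and> x!p < x!(p+1) \<and> wit up x p"
proof (rule ccontr)
  assume nop: "\<not> (\<exists>p. p+1 < n \<and> x!p < x!(p+1) \<and> wit up x p)"
  have d: "distinct x" and lx: "length x = n" using permsD[OF x] by auto
  have c1: "(a,b) \<in> inversions x" if ac: "(a,c) \<in> inversions x" "a < c" "c < b" "b \<le> n" "up c" for a b c
  proof (rule ccontr)
    assume nab: "(a,b) \<notin> inversions x"
    obtain j i where ji: "j < n" "i < n" "a = x!j" "c = x!i" "i < j" using inv_elem[OF ac(1)] lx by auto
    have "1 \<le> b" using ac by simp
    then obtain k where k: "k < n" "x!k = b" using perm_val[OF x] ac by blast
    have "k \<noteq> j" using k ji ac by auto
    moreover have "\<not> k < j" using inv_nth[OF d, of j k] ji k lx ac nab by auto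
    ultimately have "j < k" by simp
    then obtain p where pp: "i < p" "p+1 < length x" "x!p < x!i" "x!i < x!(p+1)"
      using pat_asc[OF d, of k i j] ji k lx ac by auto
    have "wit up x p" by (rule witI[of i _ _ c]) (use pp ji ac lx in auto)
    then show False using nop pp lx ji ac by auto
  qed
  have c2: "(a,b) \<in> inversions x" if cb: "(c,b) \<in> inversions x" "a < c" "c < b" "1 \<le> a" "\<not> up c" for a b c
  proof (rule ccontr)
    assume nab: "(a,b) \<notin> inversions x"
    obtain k j where kj: "k < n" "j < n" "c = x!k" "b = x!j" "j < k" using inv_elem[OF cb(1)] lx by auto
    have "a \<le> n" using inv_bound[OF x cb(1)] cb by simp
    then obtain i where i: "i < n" "x!i = a" using perm_val[OF x] cb by blast
    have "i \<noteq> j" using i kj cb by auto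
    moreover have "\<not> j < i" using inv_nth[OF d, of i j] i kj lx cb nab by auto
    ultimately have "i < j" by simp
    then obtain p where pp: "p+1 < k" "x!p < x!k" "x!k < x!(p+1)"
      using pat_asc2[OF d, of k i j] i kj lx cb by auto
    have "wit up x p" by (rule witI[of k _ _ c]) (use pp kj cb lx in auto)
    then show False using nop pp lx kj cb by auto
  qed
  have "Kset up n (inversions x) = inversions x"
  proof (rule K_closed)
    show "(a,b) \<in> inversions x" if "(a,c) \<in> inversions x" "a < c" "c < b" "b \<le> n" "up c" for a b c
      using c1[OF that] .
    show "(a,b) \<in> inversions x" if "(c,b) \<in> inversions x" "a < c" "c < b" "1 \<le> a" "\<not> up c" for a b c
      using c2[OF that] .
  qed
  then show False using nc by blast
qed

definition GC :: "nat \<Rightarrow> (nat \<Rightarrow> nat \<Rightarrow> bool) \<Rightarrow> (nat list \<times> nat list) set \<Rightarrow> bool" where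
  "GC n E R \<longleftrightarrow> lattice_cong n R \<and> (\<forall>i j. E i j \<longrightarrow> (stransp n j, pmult (stransp n j) (stransp n i)) \<in> R)"

lemma card_inv_le: "x \<in> perms n \<Longrightarrow> card (inversions x) \<le> n * n"
proof -
  assume x: "x \<in> perms n"
  have "card (inversions x) \<le> card ({1..n} \<times> {1..n})" by (rule card_mono) (use inv_sub[OF x] in auto)
  then show ?thesis by (simp add: card_cartesian_product)
qed

lemma down_chain:
  assumes ori: "orientation n E" and upE: "\<forall>b. 2 \<le> b \<and> b \<le> n - 1 \<longrightarrow> (up b \<longleftrightarrow> E b (b - 1))"
  shows "\<forall>x. x \<in> perms n \<longrightarrow> card (inversions x) = k \<longrightarrow>
    (\<exists>b\<in>avoiders n up. inversions b = Jset up (inversions x) \<and>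
       Kset up n (inversions b) = Kset up n (inversions x) \<and> (\<forall>R. GC n E R \<longrightarrow> (b,x) \<in> R))"
proof (induction k rule: less_induct)
  case (less k)
  show ?case
  proof (intro allI impI)
    fix x assume x: "x \<in> perms n" and k: "card (inversions x) = k"
    show "\<exists>b\<in>avoiders n up. inversions b = Jset up (inversions x) \<and>
       Kset up n (inversions b) = Kset up n (inversions x) \<and> (\<forall>R. GC n E R \<longrightarrow> (b,x) \<in> R)"
    proof (cases "x \<in> avoiders n up")
      case True
      have "\<forall>R. GC n E R \<longrightarrow> (x,x) \<in> R" using lc_refl x unfolding GC_def by blast
      then show ?thesis using True avoider_J[OF True] by (intro bexI[of _ x]) auto
    next
      case False
      obtain p where p: "p+1 < n" "x!(p+1) < x!p" "wit up (swp x p) p" using nonavoider_desc[OF x False] by blast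
      define y where "y = swp x p"
      have lx: "length x = n" using permsD[OF x] by simp
      have yp: "y \<in> perms n" unfolding y_def using swp_perm'[OF x p(1)] .
      have yn: "y!p < y!(p+1)" unfolding y_def using nth_swp'[OF x p(1)] p by simp
      have yy: "swp y p = x" unfolding y_def using swp_swp[of p x] p lx by simp
      have Iy: "inversions y = inversions x - {(x!(p+1), x!p)}" unfolding y_def using swp_down[OF x p(1,2)] .
      have mem: "(x!(p+1), x!p) \<in> inversions x" using swp_down_mem[OF x p(1,2)] .
      have "card (inversions x) > 0" using mem inv_finite[OF x] card_gt_0_iff by blast
      then have "card (inversions y) < k" using Iy mem k inv_finite[OF x] by (simp add: card_Diff1_less)
      then obtain b where b: "b \<in> avoiders n up" "inversions b = Jset up (inversions y)"
        "Kset up n (inversions b) = Kset up n (inversions y)" "\<forall>R. GC n E R \<longrightarrow> (b,y) \<in> R"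
        using less.IH yp by blast
      have JK: "Jset up (inversions x) = Jset up (inversions y)" "Kset up n (inversions x) = Kset up n (inversions y)"
        using cc_JK[OF yp p(1) yn] p(3) yy unfolding y_def by auto
      have "\<forall>R. GC n E R \<longrightarrow> (b,x) \<in> R"
      proof (intro allI impI)
        fix R assume g: "GC n E R"
        have "(y, swp y p) \<in> R" using force[OF _ _ ori upE yp p(1) yn] g p(3) unfolding GC_def y_def by blast
        then have "(y, x) \<in> R" using yy by simp
        then show "(b,x) \<in> R" using b(4) g lc_trans unfolding GC_def by blast
      qed
      then show ?thesis using b JK by (intro bexI[of _ b]) auto
    qed
  qed
qed

lemma pd:
  assumes ori: "orientation n E" and upE: "\<forall>b. 2 \<le> b \<and> b \<le> n - 1 \<longrightarrow> (up b \<longleftrightarrow> E b (b - 1))"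
    and x: "x \<in> perms n"
  shows "\<exists>b\<in>avoiders n up. inversions b = Jset up (inversions x) \<and>
       Kset up n (inversions b) = Kset up n (inversions x) \<and> (\<forall>R. GC n E R \<longrightarrow> (b,x) \<in> R)"
  using down_chain[OF ori upE] x by blast

lemma up_chain:
  shows "\<forall>x. x \<in> perms n \<longrightarrow> n * n - card (inversions x) = k \<longrightarrow>
    (\<exists>t\<in>perms n. inversions t = Kset up n (inversions x) \<and> Jset up (inversions t) = Jset up (inversions x))"
proof (induction k rule: less_induct)
  case (less k)
  show ?case
  proof (intro allI impI)
    fix x assume x: "x \<in> perms n" and k: "n * n - card (inversions x) = k"
    show "\<exists>t\<in>perms n. inversions t = Kset up n (inversions x) \<and> Jset up (inversions t) = Jset up (inversions x)"
    proof (cases "Kset up n (inversions x) = inversions x")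
      case True
      then show ?thesis using x by (intro bexI[of _ x]) auto
    next
      case False
      obtain p where p: "p+1 < n" "x!p < x!(p+1)" "wit up x p" using nonclosed_asc[OF x False] by blast
      define y where "y = swp x p"
      have yp: "y \<in> perms n" unfolding y_def using swp_perm'[OF x p(1)] .
      have Iy: "inversions y = insert (x!p, x!(p+1)) (inversions x)" unfolding y_def using swp_up[OF x p(1,2)] .
      have nm: "(x!p, x!(p+1)) \<notin> inversions x" using not_inv[OF x, of p "p+1"] p by simp
      have c1: "card (inversions y) = card (inversions x) + 1" using Iy nm inv_finite[OF x] by simp
      have "card (inversions y) \<le> n * n" by (rule card_inv_le[OF yp])
      then have "n * n - card (inversions y) < k" using c1 k by simp
      then obtain t where t: "t \<in> perms n" "inversions t = Kset up n (inversions y)" "Jset up (inversions t) = Jset up (inversions y)"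
        using less.IH yp by blast
      have JK: "Jset up (inversions y) = Jset up (inversions x)" "Kset up n (inversions y) = Kset up n (inversions x)"
        using cc_JK[OF x p] unfolding y_def by auto
      show ?thesis using t JK by (intro bexI[of _ t]) auto
    qed
  qed
qed

lemma pu: "x \<in> perms n \<Longrightarrow> \<exists>t\<in>perms n. inversions t = Kset up n (inversions x) \<and> Jset up (inversions t) = Jset up (inversions x)"
  using up_chain by blast

definition R0 :: "nat \<Rightarrow> (nat \<Rightarrow> bool) \<Rightarrow> (nat list \<times> nat list) set" where
  "R0 n up = {(x,y). x \<in> perms n \<and> y \<in> perms n \<and> Jset up (inversions x) = Jset up (inversions y)}"

lemma avoiders_perms: "b \<in> avoiders n up \<Longrightarrow> b \<in> perms n"
  unfolding avoiders_def by simp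

lemma JK_eq:
  assumes ori: "orientation n E" and upE: "\<forall>b. 2 \<le> b \<and> b \<le> n - 1 \<longrightarrow> (up b \<longleftrightarrow> E b (b - 1))"
    and x: "x \<in> perms n" and y: "y \<in> perms n" and J: "Jset up (inversions x) = Jset up (inversions y)"
  shows "Kset up n (inversions x) = Kset up n (inversions y)"
proof -
  obtain bx where bx: "bx \<in> avoiders n up" "inversions bx = Jset up (inversions x)" "Kset up n (inversions bx) = Kset up n (inversions x)"
    using pd[OF ori upE x] by blast
  obtain by' where by': "by' \<in> avoiders n up" "inversions by' = Jset up (inversions y)" "Kset up n (inversions by') = Kset up n (inversions y)"
    using pd[OF ori upE y] by blast
  have "bx = by'" using perm_eq[OF avoiders_perms[OF bx(1)] avoiders_perms[OF by'(1)]] bx(2) by'(2) J by simp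
  then show ?thesis using bx(3) by'(3) by simp
qed

lemma KJ_eq:
  assumes x: "x \<in> perms n" and y: "y \<in> perms n" and K: "Kset up n (inversions x) = Kset up n (inversions y)"
  shows "Jset up (inversions x) = Jset up (inversions y)"
proof -
  obtain tx where tx: "tx \<in> perms n" "inversions tx = Kset up n (inversions x)" "Jset up (inversions tx) = Jset up (inversions x)"
    using pu[OF x] by blast
  obtain ty where ty: "ty \<in> perms n" "inversions ty = Kset up n (inversions y)" "Jset up (inversions ty) = Jset up (inversions y)"
    using pu[OF y] by blast
  have "tx = ty" using perm_eq[OF tx(1) ty(1)] tx(2) ty(2) K by simp
  then show ?thesis using tx(3) ty(3) by simp
qed

lemma meet_aux:
  assumes ori: "orientation n E" and upE: "\<forall>b. 2 \<le> b \<and> b \<le> n - 1 \<longrightarrow> (up b \<longleftrightarrow> E b (b - 1))"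
    and J: "Jset up (inversions x) = Jset up (inversions y)"
    and m: "is_meet n x z m" and m': "is_meet n y z m'"
  shows "Jset up (inversions m') \<subseteq> Jset up (inversions m)"
proof -
  have m'p: "m' \<in> perms n" using m' unfolding is_meet_def by simp
  obtain b where b: "b \<in> avoiders n up" "inversions b = Jset up (inversions m')"
    using pd[OF ori upE m'p] by blast
  have bp: "b \<in> perms n" using avoiders_perms[OF b(1)] .
  have "inversions m' \<subseteq> inversions y" "inversions m' \<subseteq> inversions z" using m' unfolding is_meet_def weak_le_def by auto
  then have "inversions b \<subseteq> Jset up (inversions y)" using b(2) J_mono by metis
  then have bx: "inversions b \<subseteq> inversions x" using J J_sub by blast
  have bz: "inversions b \<subseteq> inversions z" using b(2) J_sub \<open>inversions m' \<subseteq> inversions z\<close> by blast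
  have "inversions b \<subseteq> inversions m" using m bp bx bz unfolding is_meet_def weak_le_def by blast
  then have "Jset up (inversions b) \<subseteq> Jset up (inversions m)" by (rule J_mono)
  then show ?thesis using b(2) J_idem by metis
qed

lemma join_aux:
  assumes ori: "orientation n E" and upE: "\<forall>b. 2 \<le> b \<and> b \<le> n - 1 \<longrightarrow> (up b \<longleftrightarrow> E b (b - 1))"
    and x: "x \<in> perms n" and y: "y \<in> perms n"
    and J: "Jset up (inversions x) = Jset up (inversions y)"
    and m: "is_join n x z m" and m': "is_join n y z m'"
  shows "Kset up n (inversions m') \<subseteq> Kset up n (inversions m)"
proof -
  have K: "Kset up n (inversions x) = Kset up n (inversions y)" using JK_eq[OF ori upE x y J] .
  have mp: "m \<in> perms n" using m unfolding is_join_def by simp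
  obtain t where t: "t \<in> perms n" "inversions t = Kset up n (inversions m)" using pu[OF mp] by blast
  have xm: "inversions x \<subseteq> inversions m" and zm: "inversions z \<subseteq> inversions m" using m unfolding is_join_def weak_le_def by auto
  have "inversions y \<subseteq> Kset up n (inversions y)" by (rule K_ext)
  also have "\<dots> = Kset up n (inversions x)" using K by simp
  also have "\<dots> \<subseteq> Kset up n (inversions m)" by (rule K_mono[OF xm])
  finally have yt: "inversions y \<subseteq> inversions t" using t by simp
  have zt: "inversions z \<subseteq> inversions t" using zm K_ext t by blast
  have "inversions m' \<subseteq> inversions t" using m' t(1) yt zt unfolding is_join_def weak_le_def by blast
  then have "Kset up n (inversions m') \<subseteq> Kset up n (Kset up n (inversions m))" using t(2) K_mono by metis
  then show ?thesis using K_idem by metis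
qed

lemma R0_lc:
  assumes ori: "orientation n E" and upE: "\<forall>b. 2 \<le> b \<and> b \<le> n - 1 \<longrightarrow> (up b \<longleftrightarrow> E b (b - 1))"
  shows "lattice_cong n (R0 n up)"
  unfolding lattice_cong_def
proof (intro conjI allI impI)
  show "equiv (perms n) (R0 n up)"
    unfolding equiv_def refl_on_def sym_def trans_def R0_def by auto
next
  fix x y z m m' assume h: "(x, y) \<in> R0 n up \<and> z \<in> perms n \<and> is_meet n x z m \<and> is_meet n y z m'"
  have J: "Jset up (inversions x) = Jset up (inversions y)" using h unfolding R0_def by auto
  have "Jset up (inversions m') \<subseteq> Jset up (inversions m)" using meet_aux[OF ori upE J] h by blast
  moreover have "Jset up (inversions m) \<subseteq> Jset up (inversions m')" using meet_aux[OF ori upE J[symmetric]] h by blast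
  moreover have "m \<in> perms n" "m' \<in> perms n" using h unfolding is_meet_def by auto
  ultimately show "(m, m') \<in> R0 n up" unfolding R0_def by auto
next
  fix x y z m m' assume h: "(x, y) \<in> R0 n up \<and> z \<in> perms n \<and> is_join n x z m \<and> is_join n y z m'"
  have J: "Jset up (inversions x) = Jset up (inversions y)" and x: "x \<in> perms n" and y: "y \<in> perms n"
    using h unfolding R0_def by auto
  have "Kset up n (inversions m') \<subseteq> Kset up n (inversions m)" using join_aux[OF ori upE x y J] h by blast
  moreover have "Kset up n (inversions m) \<subseteq> Kset up n (inversions m')" using join_aux[OF ori upE y x J[symmetric]] h by blast
  moreover have mp: "m \<in> perms n" "m' \<in> perms n" using h unfolding is_join_def by auto
  ultimately have "Jset up (inversions m) = Jset up (inversions m')" using KJ_eq[OF mp] by blast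
  then show "(m, m') \<in> R0 n up" using mp unfolding R0_def by auto
qed

lemma R0_gen:
  assumes ori: "orientation n E" and upE: "\<forall>b. 2 \<le> b \<and> b \<le> n - 1 \<longrightarrow> (up b \<longleftrightarrow> E b (b - 1))"
    and e: "E i j"
  shows "(stransp n j, pmult (stransp n j) (stransp n i)) \<in> R0 n up"
proof -
  have o1: "\<forall>i j. E i j \<longrightarrow> 1 \<le> i \<and> i \<le> n - 1 \<and> 1 \<le> j \<and> j \<le> n - 1 \<and> (j = i + 1 \<or> i = j + 1)"
    using ori unfolding orientation_def by (rule conjunct1)
  have "1 \<le> i \<and> i \<le> n - 1 \<and> 1 \<le> j \<and> j \<le> n - 1 \<and> (j = i + 1 \<or> i = j + 1)" using o1[rule_format, OF e] .
  then have b: "1 \<le> i" "i \<le> n - 1" "1 \<le> j" "j \<le> n - 1" "j = i + 1 \<or> i = j + 1" by auto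
  show ?thesis
  proof (cases "i = j + 1")
    case True
    have j2: "j + 2 \<le> n" using b True by simp
    have "2 \<le> j+1 \<and> j+1 \<le> n-1 \<longrightarrow> (up (j+1) \<longleftrightarrow> E (j+1) (j+1-1))" using spec[OF upE, of "j+1"] .
    then have u: "up (j+1)" using b True e by simp
    have I': "inversions (pmult (stransp n j) (stransp n (j+1))) = {(j, j+1), (j, j+2)}" using gen1_inv[of j n] b j2 by simp
    have Iu: "inversions (stransp n j) = {(j, j+1)}" using stransp_inv[of j n] b j2 by simp
    have "(j, j+2) \<notin> Jset up (inversions (pmult (stransp n j) (stransp n (j+1))))"
    proof
      assume "(j, j+2) \<in> Jset up (inversions (pmult (stransp n j) (stransp n (j+1))))"
      then have "\<forall>c. j < c \<and> c < j+2 \<and> up c \<longrightarrow> (c, j+2) \<in> Jset up (inversions (pmult (stransp n j) (stransp n (j+1))))"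
        by (rule J_memD[THEN conjunct2, THEN conjunct1])
      then have "(j+1, j+2) \<in> Jset up (inversions (pmult (stransp n j) (stransp n (j+1))))" using u by simp
      then have "(j+1, j+2) \<in> inversions (pmult (stransp n j) (stransp n (j+1)))" using J_sub by blast
      then show False using I' by simp
    qed
    then have eq1: "Jset up (inversions (pmult (stransp n j) (stransp n (j+1))) - {(j, j+2)}) = Jset up (inversions (pmult (stransp n j) (stransp n (j+1))))"
      by (rule J_remove)
    have st: "{(j, j+1), (j, j+2)} - {(j, j+2)} = {(j, j+1::nat)}" by auto
    have eq2: "inversions (pmult (stransp n j) (stransp n (j+1))) - {(j, j+2)} = inversions (stransp n j)"
      unfolding I' Iu by (rule st)
    have "Jset up (inversions (stransp n j)) = Jset up (inversions (pmult (stransp n j) (stransp n (j+1))))"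
      using eq1 unfolding eq2 .
    moreover have "stransp n j \<in> perms n" "pmult (stransp n j) (stransp n (j+1)) \<in> perms n"
      using stransp_perm[of j n] gen1_perm[of j n] b j2 by auto
    ultimately show ?thesis unfolding R0_def using True by simp
  next
    case False
    then have ji: "j = i + 1" using b by simp
    have i2: "i + 2 \<le> n" using b ji by simp
    have "\<forall>i. 1 \<le> i \<and> i + 2 \<le> n \<longrightarrow> (E i (i + 1) \<longleftrightarrow> \<not> E (i + 1) i)" using ori unfolding orientation_def by (rule conjunct2)
    then have "1 \<le> i \<and> i + 2 \<le> n \<longrightarrow> (E i (i + 1) \<longleftrightarrow> \<not> E (i + 1) i)" by (rule spec)
    then have "E i (i+1) \<longleftrightarrow> \<not> E (i+1) i" using b i2 by simp
    then have ne: "\<not> E (i+1) i" using e ji by simp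
    have "2 \<le> i+1 \<and> i+1 \<le> n-1 \<longrightarrow> (up (i+1) \<longleftrightarrow> E (i+1) (i+1-1))" using spec[OF upE, of "i+1"] .
    then have u: "\<not> up (i+1)" using b i2 ne by simp
    have I': "inversions (pmult (stransp n (i+1)) (stransp n i)) = {(i+1, i+2), (i, i+2)}" using gen2_inv[of i n] b i2 by simp
    have Iu: "inversions (stransp n (i+1)) = {(i+1, i+2)}" using stransp_inv[of "i+1" n] b i2 by simp
    have "(i, i+2) \<notin> Jset up (inversions (pmult (stransp n (i+1)) (stransp n i)))"
    proof
      assume "(i, i+2) \<in> Jset up (inversions (pmult (stransp n (i+1)) (stransp n i)))"
      then have "\<forall>c. i < c \<and> c < i+2 \<and> \<not> up c \<longrightarrow> (i, c) \<in> Jset up (inversions (pmult (stransp n (i+1)) (stransp n i)))"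
        by (rule J_memD[THEN conjunct2, THEN conjunct2])
      then have "(i, i+1) \<in> Jset up (inversions (pmult (stransp n (i+1)) (stransp n i)))" using u by simp
      then have "(i, i+1) \<in> inversions (pmult (stransp n (i+1)) (stransp n i))" using J_sub by blast
      then show False using I' by simp
    qed
    then have eq1: "Jset up (inversions (pmult (stransp n (i+1)) (stransp n i)) - {(i, i+2)}) = Jset up (inversions (pmult (stransp n (i+1)) (stransp n i)))"
      by (rule J_remove)
    have st: "{(i+1, i+2), (i, i+2)} - {(i, i+2)} = {(i+1, i+2::nat)}" by auto
    have eq2: "inversions (pmult (stransp n (i+1)) (stransp n i)) - {(i, i+2)} = inversions (stransp n (i+1))"
      unfolding I' Iu by (rule st)
    have "Jset up (inversions (stransp n (i+1))) = Jset up (inversions (pmult (stransp n (i+1)) (stransp n i)))"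
      using eq1 unfolding eq2 .
    moreover have "stransp n (i+1) \<in> perms n" "pmult (stransp n (i+1)) (stransp n i) \<in> perms n"
      using stransp_perm[of "i+1" n] gen2_perm[of i n] b i2 by auto
    ultimately show ?thesis unfolding R0_def using ji by simp
  qed
qed

lemma cc_eq:
  assumes ori: "orientation n E" and upE: "\<forall>b. 2 \<le> b \<and> b \<le> n - 1 \<longrightarrow> (up b \<longleftrightarrow> E b (b - 1))"
  shows "cambrian_cong n E = R0 n up"
proof
  have "R0 n up \<in> {R. lattice_cong n R \<and> (\<forall>i j. E i j \<longrightarrow> (stransp n j, pmult (stransp n j) (stransp n i)) \<in> R)}"
    using R0_lc[OF ori upE] R0_gen[OF ori upE] by blast
  then show "cambrian_cong n E \<subseteq> R0 n up" unfolding cambrian_cong_def by blast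
next
  show "R0 n up \<subseteq> cambrian_cong n E"
    unfolding cambrian_cong_def
  proof (rule Inter_greatest)
    fix R assume "R \<in> {R. lattice_cong n R \<and> (\<forall>i j. E i j \<longrightarrow> (stransp n j, pmult (stransp n j) (stransp n i)) \<in> R)}"
    then have g: "GC n E R" unfolding GC_def by blast
    then have lc: "lattice_cong n R" unfolding GC_def by blast
    show "R0 n up \<subseteq> R"
    proof
      fix z assume "z \<in> R0 n up"
      then obtain x y where z: "z = (x,y)" "x \<in> perms n" "y \<in> perms n" "Jset up (inversions x) = Jset up (inversions y)"
        unfolding R0_def by blast
      obtain bx where bx: "bx \<in> avoiders n up" "inversions bx = Jset up (inversions x)" "(bx, x) \<in> R"
        using pd[OF ori upE z(2)] g by blast
      obtain by' where by': "by' \<in> avoiders n up" "inversions by' = Jset up (inversions y)" "(by', y) \<in> R"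
        using pd[OF ori upE z(3)] g by blast
      have "bx = by'" using perm_eq[OF avoiders_perms[OF bx(1)] avoiders_perms[OF by'(1)]] bx(2) by'(2) z(4) by simp
      then have "(x, by') \<in> R" using lc_sym[OF lc bx(3)] by simp
      then have "(x, y) \<in> R" using lc_trans[OF lc _ by'(3)] by blast
      then show "z \<in> R" using z by simp
    qed
  qed
qed

theorem theorem6p4:
  fixes n :: nat and E :: "nat \<Rightarrow> nat \<Rightarrow> bool" and up :: "nat \<Rightarrow> bool"
  assumes "orientation n E"
    and "\<forall>b. 2 \<le> b \<and> b \<le> n - 1 \<longrightarrow> (up b \<longleftrightarrow> E b (b - 1))"
  shows "\<exists>f. bij_betw f (perms n // cambrian_cong n E) (avoiders n up) \<and>
    (\<forall>X \<in> perms n // cambrian_cong n E. \<forall>Y \<in> perms n // cambrian_cong n E.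
       quot_le n (cambrian_cong n E) X Y \<longleftrightarrow> weak_le (f X) (f Y))"
proof -
  note ori = assms(1) and upE = assms(2)
  have C: "cambrian_cong n E = R0 n up" using cc_eq[OF ori upE] .
  define R where "R = R0 n up"
  have eqv: "equiv (perms n) R" unfolding R_def using lc_equiv[OF R0_lc[OF ori upE]] .
  have memR: "(x,y) \<in> R \<longleftrightarrow> x \<in> perms n \<and> y \<in> perms n \<and> Jset up (inversions x) = Jset up (inversions y)" for x y
    unfolding R_def R0_def by simp
  have sameJ: "u \<in> perms n \<and> v \<in> perms n \<and> Jset up (inversions u) = Jset up (inversions v)"
    if X: "X \<in> perms n // R" and u: "u \<in> X" and v: "v \<in> X" for X u v
  proof -
    obtain x where x: "x \<in> perms n" "X = R `` {x}" using X by (auto elim: quotientE)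
    have "(x,u) \<in> R" "(x,v) \<in> R" using x u v by auto
    then show ?thesis using memR by auto
  qed
  have Xeq: "X = R `` {u}" if X: "X \<in> perms n // R" and u: "u \<in> X" for X u
  proof -
    obtain x where x: "x \<in> perms n" "X = R `` {x}" using X by (auto elim: quotientE)
    have "(x,u) \<in> R" using x u by auto
    then show ?thesis using equiv_class_eq[OF eqv] x by metis
  qed
  have uniq: "\<exists>!b. b \<in> X \<inter> avoiders n up" if X: "X \<in> perms n // R" for X
  proof -
    obtain x where x: "x \<in> perms n" "X = R `` {x}" using X by (auto elim: quotientE)
    obtain b where b: "b \<in> avoiders n up" "inversions b = Jset up (inversions x)"
      using pd[OF ori upE x(1)] by blast
    have bp: "b \<in> perms n" using avoiders_perms[OF b(1)] .
    have "Jset up (inversions b) = Jset up (inversions x)" using b(2) J_idem by metis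
    then have "(x,b) \<in> R" using memR x bp by simp
    then have bX: "b \<in> X \<inter> avoiders n up" using x b by auto
    show ?thesis
    proof (rule ex1I[where P = "\<lambda>b. b \<in> X \<inter> avoiders n up", OF bX])
      fix b' assume b': "b' \<in> X \<inter> avoiders n up"
      have "Jset up (inversions b') = Jset up (inversions b)" using sameJ[OF X] b' bX by auto
      then have "inversions b' = inversions b" using avoider_J b' bX by auto
      then show "b' = b" using perm_eq avoiders_perms b' bX by blast
    qed
  qed
  define f where "f X = (THE b. b \<in> X \<inter> avoiders n up)" for X
  have fX: "f X \<in> X \<inter> avoiders n up" if X: "X \<in> perms n // R" for X
    unfolding f_def using theI'[OF uniq[OF X]] .
  have fXp: "f X \<in> perms n" if X: "X \<in> perms n // R" for X
    using fX[OF X] avoiders_perms by blast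
  have bij: "bij_betw f (perms n // R) (avoiders n up)"
    unfolding bij_betw_def
  proof
    show "inj_on f (perms n // R)"
    proof (rule inj_onI)
      fix X Y assume X: "X \<in> perms n // R" and Y: "Y \<in> perms n // R" and e: "f X = f Y"
      have "X = R `` {f X}" using Xeq[OF X] fX[OF X] by blast
      moreover have "Y = R `` {f Y}" using Xeq[OF Y] fX[OF Y] by blast
      ultimately show "X = Y" using e by simp
    qed
    show "f ` (perms n // R) = avoiders n up"
    proof
      show "f ` (perms n // R) \<subseteq> avoiders n up" using fX by blast
      show "avoiders n up \<subseteq> f ` (perms n // R)"
      proof
        fix a assume a: "a \<in> avoiders n up"
        have ap: "a \<in> perms n" using avoiders_perms[OF a] .
        define X where "X = R `` {a}"
        have X: "X \<in> perms n // R" unfolding X_def using ap by (rule quotientI)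
        have "(a,a) \<in> R" using memR ap by simp
        then have "a \<in> X \<inter> avoiders n up" unfolding X_def using a by auto
        then have "f X = a" using fX[OF X] uniq[OF X] by blast
        then show "a \<in> f ` (perms n // R)" using X by blast
      qed
    qed
  qed
  have ord: "quot_le n R X Y \<longleftrightarrow> weak_le (f X) (f Y)"
    if X: "X \<in> perms n // R" and Y: "Y \<in> perms n // R" for X Y
  proof
    assume "quot_le n R X Y"
    then obtain x y m where xy: "x \<in> X" "y \<in> Y" "is_meet n x y m" "m \<in> X" unfolding quot_le_def by blast
    have "inversions (f X) = Jset up (inversions (f X))" using avoider_J fX[OF X] by auto
    also have "\<dots> = Jset up (inversions m)" using sameJ[OF X] fX[OF X] xy by blast
    also have "\<dots> \<subseteq> Jset up (inversions y)" using J_mono xy(3) unfolding is_meet_def weak_le_def by blast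
    also have "\<dots> = Jset up (inversions (f Y))" using sameJ[OF Y] fX[OF Y] xy by blast
    also have "\<dots> = inversions (f Y)" using avoider_J fX[OF Y] by auto
    finally show "weak_le (f X) (f Y)" unfolding weak_le_def .
  next
    assume w: "weak_le (f X) (f Y)"
    have "is_meet n (f X) (f Y) (f X)" using meet_le1[OF fXp[OF X]] w unfolding weak_le_def by blast
    then show "quot_le n R X Y" unfolding quot_le_def using fX[OF X] fX[OF Y] by blast
  qed
  show ?thesis unfolding C R_def[symmetric] using bij ord by blast
qed


end
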